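(* Let $G=A\star_C B$ be an amalgamated free product. If for some $2\le n\le\infty$ both pairs $(A,C)$ and $(B,C)$ are $n$-RF, then the pairs $(G,A)$ and $(G,B)$ are $n$-RF.
   Context: For a group $G$, subgroup $D$, and $2\le n\le\infty$: $a\in G\setminus D$ is $n$-RF rel $D$ if $a^{e_1}d_1\cdots a^{e_k}d_k\ne\mathrm{id}$ for all $k\ge1$, $e_i\in\{\pm1\}$, $d_i\in D$ such that $d_i\ne\mathrm{id}$ whenever $e_i=-e_{i+1}$ (indices mod $k$), and fewer than $n$ of the $e_i$ are $+1$ and fewer than $n$ are $-1$. The pair $(G,D)$ is $n$-RF if every element of $G\setminus D$ is $n$-RF rel $D$. *)

theory Defs
  imports "HOL-Algebra.Algebra" "HOL-Library.Extended_Nat"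
begin

text \<open>Internal amalgamated free product: G = A *_C B, with A, B subgroups of G,
  C = A \<inter> B, G generated by A \<union> B, and the universal property of the pushout
  (tested against all groups whose carrier lives in the type of lists over the
  carrier type, which is large enough to contain a copy of the abstract amalgam).\<close>
definition amalgamated_free_product ::
  "('a, 'm) monoid_scheme \<Rightarrow> 'a set \<Rightarrow> 'a set \<Rightarrow> 'a set \<Rightarrow> bool" where
  "amalgamated_free_product G A B C \<longleftrightarrow>
     group G \<and> subgroup A G \<and> subgroup B G \<and> A \<inter> B = C \<and>
     generate G (A \<union> B) = carrier G \<and>
     (\<forall>(H :: 'a list monoid) f g. group H \<longrightarrow>
        f \<in> hom (G\<lparr>carrier := A\<rparr>) H \<longrightarrow> g \<in> hom (G\<lparr>carrier := B\<rparr>) H \<longrightarrow>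
        (\<forall>c\<in>C. f c = g c) \<longrightarrow>
        (\<exists>h \<in> hom G H. (\<forall>a\<in>A. h a = f a) \<and> (\<forall>b\<in>B. h b = g b)))"

definition rf_word :: "('a, 'm) monoid_scheme \<Rightarrow> 'a \<Rightarrow> nat \<Rightarrow> (nat \<Rightarrow> int) \<Rightarrow> (nat \<Rightarrow> 'a) \<Rightarrow> 'a" where
  "rf_word G a k e d = foldr (\<lambda>i x. (a [^]\<^bsub>G\<^esub> e i) \<otimes>\<^bsub>G\<^esub> d i \<otimes>\<^bsub>G\<^esub> x) [0..<k] \<one>\<^bsub>G\<^esub>"

definition n_RF_rel :: "('a, 'm) monoid_scheme \<Rightarrow> 'a set \<Rightarrow> enat \<Rightarrow> 'a \<Rightarrow> bool" where
  "n_RF_rel G D n a \<longleftrightarrow> a \<in> carrier G - D \<and>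
     (\<forall>(k::nat) (e::nat \<Rightarrow> int) (d::nat \<Rightarrow> 'a).
        1 \<le> k \<longrightarrow>
        (\<forall>i<k. e i \<in> {1, -1} \<and> d i \<in> D) \<longrightarrow>
        (\<forall>i<k. e i = - e (Suc i mod k) \<longrightarrow> d i \<noteq> \<one>\<^bsub>G\<^esub>) \<longrightarrow>
        enat (card {i. i < k \<and> e i = 1}) < n \<longrightarrow>
        enat (card {i. i < k \<and> e i = -1}) < n \<longrightarrow>
        rf_word G a k e d \<noteq> \<one>\<^bsub>G\<^esub>)"

definition n_RF_pair :: "('a, 'm) monoid_scheme \<Rightarrow> 'a set \<Rightarrow> enat \<Rightarrow> bool" where
  "n_RF_pair G D n \<longleftrightarrow> (\<forall>a \<in> carrier G - D. n_RF_rel G D n a)"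

end

theory Submission
  imports Defs
begin
locale amal = group G for G (structure) +
  fixes A B C :: "'a set"
  assumes subA: "subgroup A G" and subB: "subgroup B G" and ABC: "A \<inter> B = C"
    and gen: "generate G (A \<union> B) = carrier G"
    and univ: "\<forall>(H :: 'a list monoid) f g. group H \<longrightarrow>
        f \<in> hom (G\<lparr>carrier := A\<rparr>) H \<longrightarrow> g \<in> hom (G\<lparr>carrier := B\<rparr>) H \<longrightarrow>
        (\<forall>c\<in>C. f c = g c) \<longrightarrow>
        (\<exists>h \<in> hom G H. (\<forall>a\<in>A. h a = f a) \<and> (\<forall>b\<in>B. h b = g b))"
begin

lemma A_car: "x \<in> A \<Longrightarrow> x \<in> carrier G" by (rule subgroup.mem_carrier[OF subA])
lemma B_car: "x \<in> B \<Longrightarrow> x \<in> carrier G" by (rule subgroup.mem_carrier[OF subB])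
lemma CA: "x \<in> C \<Longrightarrow> x \<in> A" using ABC by blast
lemma CB: "x \<in> C \<Longrightarrow> x \<in> B" using ABC by blast
lemma C_car: "x \<in> C \<Longrightarrow> x \<in> carrier G" using CA A_car by blast
lemma C_one[simp]: "\<one> \<in> C" using ABC subgroup.one_closed[OF subA] subgroup.one_closed[OF subB] by blast
lemma A_one[simp]: "\<one> \<in> A" by (rule subgroup.one_closed[OF subA])
lemma B_one[simp]: "\<one> \<in> B" by (rule subgroup.one_closed[OF subB])
lemma C_mult: "x \<in> C \<Longrightarrow> y \<in> C \<Longrightarrow> x \<otimes> y \<in> C"
  using ABC subgroup.m_closed[OF subA] subgroup.m_closed[OF subB] by blast
lemma C_inv: "x \<in> C \<Longrightarrow> inv x \<in> C"
  using ABC subgroup.m_inv_closed[OF subA] subgroup.m_inv_closed[OF subB] by blast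
lemma A_mult: "x \<in> A \<Longrightarrow> y \<in> A \<Longrightarrow> x \<otimes> y \<in> A" by (rule subgroup.m_closed[OF subA])
lemma B_mult: "x \<in> B \<Longrightarrow> y \<in> B \<Longrightarrow> x \<otimes> y \<in> B" by (rule subgroup.m_closed[OF subB])
lemma A_inv: "x \<in> A \<Longrightarrow> inv x \<in> A" by (rule subgroup.m_inv_closed[OF subA])
lemma B_inv: "x \<in> B \<Longrightarrow> inv x \<in> B" by (rule subgroup.m_inv_closed[OF subB])

lemma cancel1[simp]: "x \<in> carrier G \<Longrightarrow> y \<in> carrier G \<Longrightarrow> inv x \<otimes> (x \<otimes> y) = y"
  by (simp add: m_assoc[symmetric])
lemma cancel2[simp]: "x \<in> carrier G \<Longrightarrow> y \<in> carrier G \<Longrightarrow> x \<otimes> (inv x \<otimes> y) = y"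
  by (simp add: m_assoc[symmetric])
lemma cancel3[simp]: "x \<in> carrier G \<Longrightarrow> y \<in> carrier G \<Longrightarrow> y \<otimes> inv x \<otimes> x = y"
  by (simp add: m_assoc)
lemma cancel4[simp]: "x \<in> carrier G \<Longrightarrow> y \<in> carrier G \<Longrightarrow> y \<otimes> x \<otimes> inv x = y"
  by (simp add: m_assoc)

definition fac :: "bool \<Rightarrow> 'a set" where "fac K = (if K then A else B)"
definition ty :: "'a \<Rightarrow> bool" where "ty x = (x \<in> A)"

lemma fac_sub: "subgroup (fac K) G" using subA subB by (simp add: fac_def)
lemma fac_car: "x \<in> fac K \<Longrightarrow> x \<in> carrier G" by (rule subgroup.mem_carrier[OF fac_sub])
lemma fac_mult: "x \<in> fac K \<Longrightarrow> y \<in> fac K \<Longrightarrow> x \<otimes> y \<in> fac K"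
  by (rule subgroup.m_closed[OF fac_sub])
lemma fac_inv: "x \<in> fac K \<Longrightarrow> inv x \<in> fac K" by (rule subgroup.m_inv_closed[OF fac_sub])
lemma C_fac: "x \<in> C \<Longrightarrow> x \<in> fac K" using CA CB by (simp add: fac_def)
lemma fac_one[simp]: "\<one> \<in> fac K" by (simp add: C_fac)
lemma typ_fac: "x \<in> fac K \<Longrightarrow> x \<notin> C \<Longrightarrow> ty x = K"
  using ABC by (auto simp: fac_def ty_def)
lemma fac_typ: "x \<in> A \<union> B \<Longrightarrow> x \<in> fac (ty x)"
  by (auto simp: fac_def ty_def)

definition tau :: "'a \<Rightarrow> 'a" where
  "tau a = (if a \<in> C then \<one> else (SOME s. \<exists>c\<in>C. s = c \<otimes> a))"

lemma tau1: assumes "a \<in> carrier G" shows "\<exists>c\<in>C. tau a = c \<otimes> a"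
proof (cases "a \<in> C")
  case True
  then show ?thesis using C_inv[OF True] C_car[OF True] by (auto simp: tau_def intro!: bexI[of _ "inv a"])
next
  case False
  have "\<exists>s. \<exists>c\<in>C. s = c \<otimes> a" using C_one assms by (intro exI[of _ "\<one> \<otimes> a"]) blast
  then have "\<exists>c\<in>C. (SOME s. \<exists>c\<in>C. s = c \<otimes> a) = c \<otimes> a" by (rule someI_ex)
  then show ?thesis using False by (simp add: tau_def)
qed

lemma tau2: assumes "c \<in> C" "a \<in> carrier G" shows "tau (c \<otimes> a) = tau a"
proof -
  have cc: "c \<in> carrier G" using C_car assms by blast
  have mem: "(c \<otimes> a \<in> C) = (a \<in> C)"
  proof
    assume "c \<otimes> a \<in> C"
    then have "inv c \<otimes> (c \<otimes> a) \<in> C" using C_mult C_inv assms by blast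
    then show "a \<in> C" using cc assms by (simp add: m_assoc[symmetric])
  qed (use C_mult assms in blast)
  have "(\<lambda>s. \<exists>c'\<in>C. s = c' \<otimes> (c \<otimes> a)) = (\<lambda>s. \<exists>c'\<in>C. s = c' \<otimes> a)"
  proof (intro ext iffI)
    fix s assume "\<exists>c'\<in>C. s = c' \<otimes> (c \<otimes> a)"
    then obtain c' where "c' \<in> C" "s = c' \<otimes> (c \<otimes> a)" by blast
    then show "\<exists>c'\<in>C. s = c' \<otimes> a" using C_mult assms C_car
      by (intro bexI[of _ "c' \<otimes> c"]) (auto simp: m_assoc)
  next
    fix s assume "\<exists>c'\<in>C. s = c' \<otimes> a"
    then obtain c' where "c' \<in> C" "s = c' \<otimes> a" by blast
    moreover have "c' \<otimes> a = (c' \<otimes> inv c) \<otimes> (c \<otimes> a)"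
      using C_car[OF \<open>c' \<in> C\<close>] cc assms by (simp add: m_assoc)
    ultimately show "\<exists>c''\<in>C. s = c'' \<otimes> (c \<otimes> a)" using C_mult C_inv assms
      by (intro bexI[of _ "c' \<otimes> inv c"]) auto
  qed
  then show ?thesis using mem by (simp add: tau_def)
qed

lemma tau_C: "a \<in> C \<Longrightarrow> tau a = \<one>" by (simp add: tau_def)

lemma tau_car: assumes "a \<in> carrier G" shows "tau a \<in> carrier G"
proof -
  obtain c where "c \<in> C" "tau a = c \<otimes> a" using tau1 assms by blast
  then show ?thesis using C_car assms by simp
qed

lemma tau_fac: assumes "a \<in> fac K" shows "tau a \<in> fac K"
proof -
  obtain c where "c \<in> C" "tau a = c \<otimes> a" using tau1 fac_car assms by blast
  then show ?thesis using C_fac fac_mult assms by simp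
qed

lemma tau_notC: assumes "a \<in> carrier G" "a \<notin> C" shows "tau a \<notin> C"
proof
  assume h: "tau a \<in> C"
  obtain c where c: "c \<in> C" "tau a = c \<otimes> a" using tau1 assms by blast
  have "inv c \<otimes> tau a \<in> C" using h c C_mult C_inv by blast
  then show False using c assms C_car by (simp add: m_assoc[symmetric])
qed

lemma tau_idem: assumes "a \<in> carrier G" shows "tau (tau a) = tau a"
proof -
  obtain c where "c \<in> C" "tau a = c \<otimes> a" using tau1 assms by blast
  then show ?thesis using tau2 assms by simp
qed

lemma tau_rel: assumes "a \<in> carrier G" shows "a \<otimes> inv (tau a) \<in> C"
proof -
  obtain c where c: "c \<in> C" "tau a = c \<otimes> a" using tau1 assms by blast
  have "a \<otimes> inv (c \<otimes> a) = inv c" using c C_car assms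
    by (simp add: inv_mult_group m_assoc[symmetric])
  then show ?thesis using c C_inv by simp
qed

end

context amal
begin

definition sy :: "'a \<Rightarrow> bool" where "sy s \<longleftrightarrow> s \<in> A \<union> B \<and> s \<notin> C \<and> tau s = s"
definition nost :: "bool \<Rightarrow> 'a list \<Rightarrow> bool" where "nost K ss \<longleftrightarrow> (ss = [] \<or> ty (hd ss) \<noteq> K)"
definition alt :: "'a list \<Rightarrow> bool" where
  "alt ss \<longleftrightarrow> (\<forall>s\<in>set ss. sy s) \<and> successively (\<lambda>s t. ty s \<noteq> ty t) ss"
definition XX :: "'a list set" where "XX = {c # ss | c ss. c \<in> C \<and> alt ss}"

fun alpha :: "bool \<Rightarrow> 'a list \<Rightarrow> 'a \<times> 'a list" where
  "alpha K (c # s # ss) = (if ty s = K then (c \<otimes> s, ss) else (c, s # ss))"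
| "alpha K [c] = (c, [])"
| "alpha K [] = (\<one>, [])"

definition beta :: "'a \<Rightarrow> 'a list \<Rightarrow> 'a list" where
  "beta g ys = (if g \<in> C then g # ys else (g \<otimes> inv (tau g)) # tau g # ys)"
definition act :: "bool \<Rightarrow> 'a \<Rightarrow> 'a list \<Rightarrow> 'a list" where
  "act K g x = beta (g \<otimes> fst (alpha K x)) (snd (alpha K x))"
definition lact :: "'a \<Rightarrow> 'a list \<Rightarrow> 'a list" where "lact l = act (ty l) l"
definition Act :: "'a list \<Rightarrow> 'a list \<Rightarrow> 'a list" where "Act ys x = foldr lact ys x"

lemma alt_Nil[simp]: "alt []" by (simp add: alt_def)
lemma alt_Cons: "alt (s # ss) \<longleftrightarrow> sy s \<and> alt ss \<and> nost (ty s) ss"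
  by (auto simp: alt_def nost_def successively_Cons)
lemma nost_Nil[simp]: "nost K []" by (simp add: nost_def)
lemma nost_Cons[simp]: "nost K (s # ss) \<longleftrightarrow> ty s \<noteq> K" by (simp add: nost_def)

lemma sy_fac: "sy s \<Longrightarrow> s \<in> fac (ty s)" using fac_typ by (simp add: sy_def)
lemma sy_car: "sy s \<Longrightarrow> s \<in> carrier G" using sy_fac fac_car by blast
lemma sy_notC: "sy s \<Longrightarrow> s \<notin> C" by (simp add: sy_def)

lemma XX_cases: assumes "x \<in> XX" obtains c ss where "x = c # ss" "c \<in> C" "alt ss"
  using assms by (auto simp: XX_def)

lemma XX_Cons[simp]: "c # ss \<in> XX \<longleftrightarrow> c \<in> C \<and> alt ss" by (simp add: XX_def)
lemma XX_Nil[simp]: "[] \<notin> XX" by (simp add: XX_def)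

lemma alt_AB: "alt ss \<Longrightarrow> set ss \<subseteq> A \<union> B" by (auto simp: alt_def sy_def)
lemma XX_AB: assumes "x \<in> XX" shows "set x \<subseteq> A \<union> B"
proof -
  obtain c ss where x: "x = c # ss" "c \<in> C" "alt ss" using assms XX_cases by blast
  then show ?thesis using alt_AB[OF x(3)] CA by auto
qed

lemma alpha_nost: "nost K ss \<Longrightarrow> alpha K (c # ss) = (c, ss)"
  by (cases ss) (auto simp: nost_def)

lemma alpha_X: assumes "x \<in> XX"
  shows "fst (alpha K x) \<in> fac K \<and> alt (snd (alpha K x)) \<and> nost K (snd (alpha K x))"
proof -
  obtain c ss where x: "x = c # ss" "c \<in> C" "alt ss" using assms XX_cases by blast
  show ?thesis
  proof (cases ss)
    case Nil then show ?thesis using x C_fac by simp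
  next
    case (Cons s ss')
    then have s: "sy s" "alt ss'" "nost (ty s) ss'" using x alt_Cons by auto
    show ?thesis
    proof (cases "ty s = K")
      case True
      then show ?thesis using x Cons s C_fac sy_fac fac_mult by fastforce
    next
      case False
      then show ?thesis using x Cons s C_fac by simp
    qed
  qed
qed

lemma beta_X: assumes "g \<in> fac K" "alt ys" "nost K ys" shows "beta g ys \<in> XX"
proof (cases "g \<in> C")
  case True then show ?thesis using assms by (simp add: beta_def)
next
  case False
  have g: "g \<in> carrier G" using assms fac_car by blast
  have t: "tau g \<in> fac K" "tau g \<notin> C" "tau (tau g) = tau g"
    using tau_fac assms tau_notC g False tau_idem by auto
  then have ty: "ty (tau g) = K" using typ_fac by blast
  have "sy (tau g)" using t by (auto simp: sy_def fac_def split: if_splits)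
  then show ?thesis using False tau_rel[OF g] assms ty by (simp add: beta_def alt_Cons)
qed

lemma alpha_beta: assumes "g \<in> fac K" "alt ys" "nost K ys" shows "alpha K (beta g ys) = (g, ys)"
proof (cases "g \<in> C")
  case True then show ?thesis using assms alpha_nost by (simp add: beta_def)
next
  case False
  have g: "g \<in> carrier G" using assms fac_car by blast
  have t: "tau g \<in> fac K" "tau g \<notin> C" using tau_fac assms tau_notC g False by auto
  then have ty: "ty (tau g) = K" using typ_fac by blast
  show ?thesis using False ty g tau_car[OF g] by (simp add: beta_def)
qed

lemma beta_alpha: assumes "x \<in> XX" shows "beta (fst (alpha K x)) (snd (alpha K x)) = x"
proof -
  obtain c ss where x: "x = c # ss" "c \<in> C" "alt ss" using assms XX_cases by blast
  show ?thesis
  proof (cases ss)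
    case Nil then show ?thesis using x by (simp add: beta_def)
  next
    case (Cons s ss')
    then have s: "sy s" using x alt_Cons by auto
    have sc: "s \<in> carrier G" "c \<in> carrier G" using s sy_car x C_car by auto
    show ?thesis
    proof (cases "ty s = K")
      case True
      have nc: "c \<otimes> s \<notin> C"
      proof
        assume "c \<otimes> s \<in> C"
        then have "inv c \<otimes> (c \<otimes> s) \<in> C" using C_mult C_inv x by blast
        then show False using sc s sy_notC by simp
      qed
      have "tau (c \<otimes> s) = s" using tau2 x sc s by (simp add: sy_def)
      then show ?thesis using True x Cons nc sc by (simp add: beta_def)
    next
      case False
      then show ?thesis using x Cons by (simp add: beta_def)
    qed
  qed
qed

lemma act_X: assumes "g \<in> fac K" "x \<in> XX" shows "act K g x \<in> XX"
  unfolding act_def using alpha_X[OF assms(2)] assms(1) fac_mult by (intro beta_X) auto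

lemma act_mult: assumes "g \<in> fac K" "g' \<in> fac K" "x \<in> XX"
  shows "act K g (act K g' x) = act K (g \<otimes> g') x"
proof -
  have a: "fst (alpha K x) \<in> fac K" "alt (snd (alpha K x))" "nost K (snd (alpha K x))"
    using alpha_X[OF assms(3)] by auto
  have "alpha K (act K g' x) = (g' \<otimes> fst (alpha K x), snd (alpha K x))"
    unfolding act_def using a assms fac_mult by (intro alpha_beta) auto
  then show ?thesis using assms a fac_car by (simp add: act_def m_assoc)
qed

lemma act_one: assumes "x \<in> XX" shows "act K \<one> x = x"
proof -
  have "fst (alpha K x) \<in> carrier G" using alpha_X[OF assms] fac_car by blast
  then show ?thesis using beta_alpha[OF assms] by (simp add: act_def)
qed

lemma act_C: assumes "c \<in> C" "x \<in> XX" shows "act K c x = (c \<otimes> hd x) # tl x"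
proof -
  obtain c' ss where x: "x = c' # ss" "c' \<in> C" "alt ss" using assms XX_cases by blast
  have cc: "c \<in> carrier G" "c' \<in> carrier G" using assms x C_car by auto
  show ?thesis
  proof (cases ss)
    case Nil then show ?thesis using x assms C_mult by (simp add: act_def beta_def)
  next
    case (Cons s ss')
    then have s: "sy s" using x alt_Cons by auto
    have sc: "s \<in> carrier G" using s sy_car by auto
    show ?thesis
    proof (cases "ty s = K")
      case True
      have nc: "c \<otimes> (c' \<otimes> s) \<notin> C"
      proof
        assume "c \<otimes> (c' \<otimes> s) \<in> C"
        then have "inv c' \<otimes> (inv c \<otimes> (c \<otimes> (c' \<otimes> s))) \<in> C" using C_mult C_inv x assms by blast
        then show False using sc cc s sy_notC by simp
      qed
      have "tau (c \<otimes> (c' \<otimes> s)) = s" using tau2 x sc s assms cc by (simp add: sy_def)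
      then show ?thesis using True x Cons nc sc cc by (simp add: beta_def act_def m_assoc)
    next
      case False
      then show ?thesis using x Cons assms C_mult by (simp add: beta_def act_def)
    qed
  qed
qed

lemma fac_ty_mem: "l \<in> A \<union> B \<Longrightarrow> l \<in> fac (ty l)" by (rule fac_typ)

lemma lact_X: assumes "l \<in> A \<union> B" "x \<in> XX" shows "lact l x \<in> XX"
  unfolding lact_def by (rule act_X[OF fac_typ[OF assms(1)] assms(2)])

lemma Act_X: assumes "set ys \<subseteq> A \<union> B" "x \<in> XX" shows "Act ys x \<in> XX"
  using assms by (induction ys) (simp_all add: Act_def lact_X)

lemma lact_C: assumes "c \<in> C" "x \<in> XX" shows "lact c x = act K c x"
  using act_C assms by (simp add: lact_def)

lemma Act_alpha: assumes "x \<in> XX" "y \<in> XX"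
  shows "Act x y = act K (fst (alpha K x)) (Act (snd (alpha K x)) y)"
proof -
  obtain c ss where x: "x = c # ss" "c \<in> C" "alt ss" using assms XX_cases by blast
  have Z: "Act ss y \<in> XX" using Act_X[OF alt_AB[OF x(3)] assms(2)] .
  show ?thesis
  proof (cases ss)
    case Nil then show ?thesis using x lact_C[OF x(2) assms(2), of K] by (simp add: Act_def)
  next
    case (Cons s ss')
    then have s: "sy s" "alt ss'" using x alt_Cons by auto
    have Z': "Act ss' y \<in> XX" using Act_X[OF alt_AB[OF s(2)] assms(2)] .
    show ?thesis
    proof (cases "ty s = K")
      case True
      have "Act x y = lact c (lact s (Act ss' y))" using x Cons by (simp add: Act_def)
      also have "\<dots> = act K c (act K s (Act ss' y))"
      proof -
        have XA: "act K s (Act ss' y) \<in> XX" using act_X[OF _ Z'] sy_fac[OF s(1)] True by simp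
        show ?thesis using lact_C[OF x(2) XA, of K] True by (simp add: lact_def)
      qed
      also have "\<dots> = act K (c \<otimes> s) (Act ss' y)"
      proof -
        have "s \<in> fac K" using sy_fac[OF s(1)] True by simp
        then show ?thesis using act_mult[OF C_fac[OF x(2)] _ Z'] by simp
      qed
      finally show ?thesis using True x Cons by simp
    next
      case False
      have "Act x y = lact c (Act ss y)" using x by (simp add: Act_def)
      also have "\<dots> = act K c (Act ss y)" using lact_C[OF x(2) Z, of K] by simp
      finally show ?thesis using False x Cons by simp
    qed
  qed
qed

lemma Act_act: assumes "g \<in> fac K" "x \<in> XX" "y \<in> XX"
  shows "Act (act K g x) y = act K g (Act x y)"
proof -
  have a: "fst (alpha K x) \<in> fac K" "alt (snd (alpha K x))" "nost K (snd (alpha K x))"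
    using alpha_X[OF assms(2)] by auto
  have al: "alpha K (act K g x) = (g \<otimes> fst (alpha K x), snd (alpha K x))"
    unfolding act_def using a assms fac_mult by (intro alpha_beta) auto
  have Z: "Act (snd (alpha K x)) y \<in> XX" using Act_X[OF alt_AB[OF a(2)] assms(3)] .
  have "Act (act K g x) y = act K (g \<otimes> fst (alpha K x)) (Act (snd (alpha K x)) y)"
    using Act_alpha[OF act_X[OF assms(1,2)] assms(3), of K] al by simp
  also have "\<dots> = act K g (act K (fst (alpha K x)) (Act (snd (alpha K x)) y))"
    using act_mult[OF assms(1) a(1) Z] by simp
  also have "\<dots> = act K g (Act x y)" using Act_alpha[OF assms(2,3), of K] by simp
  finally show ?thesis .
qed

lemma Act_Act: assumes "set ys \<subseteq> A \<union> B" "x \<in> XX" "y \<in> XX"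
  shows "Act (Act ys x) y = Act ys (Act x y)"
  using assms(1)
proof (induction ys)
  case Nil then show ?case by (simp add: Act_def)
next
  case (Cons l ys)
  have l: "l \<in> fac (ty l)" using Cons fac_typ by auto
  have Z: "Act ys x \<in> XX" using Act_X Cons assms by auto
  have "Act (Act (l # ys) x) y = Act (act (ty l) l (Act ys x)) y" by (simp add: Act_def lact_def)
  also have "\<dots> = act (ty l) l (Act (Act ys x) y)" using Act_act[OF l Z assms(3)] .
  also have "\<dots> = act (ty l) l (Act ys (Act x y))" using Cons by simp
  finally show ?case by (simp add: Act_def lact_def)
qed

lemma Act_e_alt: assumes "alt ss" shows "Act ss [\<one>] = \<one> # ss"
  using assms
proof (induction ss)
  case Nil then show ?case by (simp add: Act_def)
next
  case (Cons s ss)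
  then have s: "sy s" "alt ss" "nost (ty s) ss" using alt_Cons by auto
  have sc: "s \<in> carrier G" "s \<notin> C" "tau s = s" using s sy_car by (auto simp: sy_def)
  have "Act (s # ss) [\<one>] = act (ty s) s (\<one> # ss)" using Cons s by (simp add: Act_def lact_def)
  also have "\<dots> = \<one> # s # ss" using alpha_nost[OF s(3)] sc by (simp add: act_def beta_def)
  finally show ?case .
qed

lemma Act_e: assumes "x \<in> XX" shows "Act x [\<one>] = x"
proof -
  obtain c ss where x: "x = c # ss" "c \<in> C" "alt ss" using assms XX_cases by blast
  have "Act x [\<one>] = lact c (\<one> # ss)" using x Act_e_alt by (simp add: Act_def)
  also have "\<dots> = act True c (\<one> # ss)" using lact_C x by simp
  also have "\<dots> = x" using act_C x C_car by simp
  finally show ?thesis .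
qed

lemma e_X[simp]: "[\<one>] \<in> XX" by simp

lemma e_Act: assumes "y \<in> XX" shows "Act [\<one>] y = y"
  using act_one[OF assms] by (simp add: Act_def lact_def)

lemma ty_inv: "l \<in> carrier G \<Longrightarrow> ty (inv l) = ty l"
  using A_inv by (auto simp: ty_def) (metis A_inv inv_inv)

lemma lact_inv: assumes "l \<in> A \<union> B" "z \<in> XX" shows "lact (inv l) (lact l z) = z"
proof -
  have l: "l \<in> fac (ty l)" "l \<in> carrier G" using assms fac_typ fac_car by auto
  have "lact (inv l) (lact l z) = act (ty l) (inv l) (act (ty l) l z)"
    using ty_inv l by (simp add: lact_def)
  also have "\<dots> = act (ty l) (inv l \<otimes> l) z" using act_mult fac_inv l assms by blast
  also have "\<dots> = z" using act_one assms l by simp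
  finally show ?thesis .
qed

lemma Act_inv: assumes "set ys \<subseteq> A \<union> B" "y \<in> XX" shows "Act (rev (map (m_inv G) ys)) (Act ys y) = y"
  using assms(1)
proof (induction ys)
  case Nil then show ?case by (simp add: Act_def)
next
  case (Cons l ys)
  have Z: "Act ys y \<in> XX" using Act_X Cons assms by auto
  have "Act (rev (map (m_inv G) (l # ys))) (Act (l # ys) y) = Act (rev (map (m_inv G) ys)) (lact (inv l) (lact l (Act ys y)))"
    by (simp add: Act_def)
  also have "\<dots> = Act (rev (map (m_inv G) ys)) (Act ys y)" using lact_inv Cons Z by simp
  finally show ?case using Cons by simp
qed

definition HH :: "'a list monoid" where "HH = \<lparr>carrier = XX, monoid.mult = Act, monoid.one = [\<one>]\<rparr>"

lemma HH_group: "group HH"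
proof (rule groupI)
  fix x y assume "x \<in> carrier HH" "y \<in> carrier HH"
  then show "x \<otimes>\<^bsub>HH\<^esub> y \<in> carrier HH" using Act_X XX_AB by (simp add: HH_def)
next
  show "\<one>\<^bsub>HH\<^esub> \<in> carrier HH" by (simp add: HH_def)
next
  fix x y z assume "x \<in> carrier HH" "y \<in> carrier HH" "z \<in> carrier HH"
  then show "x \<otimes>\<^bsub>HH\<^esub> y \<otimes>\<^bsub>HH\<^esub> z = x \<otimes>\<^bsub>HH\<^esub> (y \<otimes>\<^bsub>HH\<^esub> z)"
    using Act_Act XX_AB by (simp add: HH_def)
next
  fix x assume "x \<in> carrier HH"
  then show "\<one>\<^bsub>HH\<^esub> \<otimes>\<^bsub>HH\<^esub> x = x" using e_Act by (simp add: HH_def)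
next
  fix x assume x: "x \<in> carrier HH"
  then have x: "x \<in> XX" by (simp add: HH_def)
  have s: "set (rev (map (m_inv G) x)) \<subseteq> A \<union> B" using XX_AB[OF x] A_inv B_inv by auto
  let ?y = "Act (rev (map (m_inv G) x)) [\<one>]"
  have y: "?y \<in> XX" using Act_X s by simp
  have "Act ?y x = Act (rev (map (m_inv G) x)) (Act [\<one>] x)" using Act_Act[OF s _ x] by simp
  also have "\<dots> = Act (rev (map (m_inv G) x)) (Act x [\<one>])" using e_Act Act_e x by simp
  also have "\<dots> = [\<one>]" using Act_inv XX_AB x by simp
  finally show "\<exists>y\<in>carrier HH. y \<otimes>\<^bsub>HH\<^esub> x = \<one>\<^bsub>HH\<^esub>" using y by (auto simp: HH_def)
qed

end

context amal
begin

lemma act_e_X: "g \<in> fac K \<Longrightarrow> act K g [\<one>] \<in> XX" using act_X e_X by blast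

lemma fK_hom: "(\<lambda>a. act K a [\<one>]) \<in> hom (G\<lparr>carrier := fac K\<rparr>) HH"
proof (rule homI)
  fix x assume "x \<in> carrier (G\<lparr>carrier := fac K\<rparr>)"
  then show "act K x [\<one>] \<in> carrier HH" using act_e_X by (simp add: HH_def)
next
  fix x y assume xy: "x \<in> carrier (G\<lparr>carrier := fac K\<rparr>)" "y \<in> carrier (G\<lparr>carrier := fac K\<rparr>)"
  then have x: "x \<in> fac K" and y: "y \<in> fac K" by auto
  have "Act (act K x [\<one>]) (act K y [\<one>]) = act K x (Act [\<one>] (act K y [\<one>]))"
    using Act_act[OF x e_X act_e_X[OF y]] .
  also have "\<dots> = act K x (act K y [\<one>])" using e_Act act_e_X[OF y] by simp
  also have "\<dots> = act K (x \<otimes> y) [\<one>]" using act_mult x y by simp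
  finally show "act K (x \<otimes>\<^bsub>G\<lparr>carrier := fac K\<rparr>\<^esub> y) [\<one>] =
      act K x [\<one>] \<otimes>\<^bsub>HH\<^esub> act K y [\<one>]" by (simp add: HH_def)
qed

definition hN :: "'a \<Rightarrow> 'a list" where
  "hN = (SOME h. h \<in> hom G HH \<and> (\<forall>a\<in>A. h a = act True a [\<one>]) \<and> (\<forall>b\<in>B. h b = act False b [\<one>]))"

lemma hN_spec: "hN \<in> hom G HH \<and> (\<forall>a\<in>A. hN a = act True a [\<one>]) \<and> (\<forall>b\<in>B. hN b = act False b [\<one>])"
proof -
  have fA: "(\<lambda>a. act True a [\<one>]) \<in> hom (G\<lparr>carrier := A\<rparr>) HH" using fK_hom[of True] by (simp add: fac_def)
  have fB: "(\<lambda>a. act False a [\<one>]) \<in> hom (G\<lparr>carrier := B\<rparr>) HH" using fK_hom[of False] by (simp add: fac_def)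
  have "\<forall>c\<in>C. act True c [\<one>] = act False c [\<one>]" using act_C by simp
  then have "\<exists>h. h \<in> hom G HH \<and> (\<forall>a\<in>A. h a = act True a [\<one>]) \<and> (\<forall>b\<in>B. h b = act False b [\<one>])"
    using univ HH_group fA fB by blast
  then show ?thesis unfolding hN_def by (rule someI_ex)
qed

lemma hN_X: "g \<in> carrier G \<Longrightarrow> hN g \<in> XX"
  using hN_spec hom_in_carrier by (fastforce simp: HH_def)

lemma hN_mult: "g \<in> carrier G \<Longrightarrow> g' \<in> carrier G \<Longrightarrow> hN (g \<otimes> g') = Act (hN g) (hN g')"
  using hN_spec hom_mult by (fastforce simp: HH_def)

lemma hN_let: assumes "l \<in> A \<union> B" shows "hN l = lact l [\<one>]"
proof (cases "l \<in> A")
  case True then show ?thesis using hN_spec by (simp add: lact_def ty_def)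
next
  case False then show ?thesis using hN_spec assms by (simp add: lact_def ty_def)
qed

lemma hN_one: "hN \<one> = [\<one>]"
  using hN_let[of \<one>] e_Act[OF e_X] by (simp add: Act_def)

lemma let_car: "l \<in> A \<union> B \<Longrightarrow> l \<in> carrier G" using A_car B_car by blast

lemma hN_let_mult: assumes "l \<in> A \<union> B" "g \<in> carrier G" shows "hN (l \<otimes> g) = lact l (hN g)"
proof -
  have "hN (l \<otimes> g) = Act (Act [l] [\<one>]) (hN g)"
    using hN_mult[OF let_car[OF assms(1)] assms(2)] hN_let[OF assms(1)] by (simp add: Act_def)
  also have "\<dots> = Act [l] (Act [\<one>] (hN g))" using Act_Act[of "[l]"] assms hN_X by simp
  also have "\<dots> = lact l (hN g)" using e_Act hN_X assms by (simp add: Act_def)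
  finally show ?thesis .
qed

definition P :: "'a list \<Rightarrow> 'a" where "P ys = foldr (\<lambda>x y. x \<otimes> y) ys \<one>"

lemma P_Nil[simp]: "P [] = \<one>" by (simp add: P_def)
lemma P_Cons[simp]: "P (x # ys) = x \<otimes> P ys" by (simp add: P_def)
lemma P_car: "set ys \<subseteq> carrier G \<Longrightarrow> P ys \<in> carrier G" by (induction ys) auto
lemma P_append: "set xs \<subseteq> carrier G \<Longrightarrow> set ys \<subseteq> carrier G \<Longrightarrow> P (xs @ ys) = P xs \<otimes> P ys"
  by (induction xs) (auto simp: m_assoc P_car)

lemma AB_car: "set ys \<subseteq> A \<union> B \<Longrightarrow> set ys \<subseteq> carrier G" using let_car by blast
lemma XX_car: "x \<in> XX \<Longrightarrow> set x \<subseteq> carrier G" using XX_AB AB_car by blast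

lemma P_beta: assumes "g \<in> carrier G" "set ys \<subseteq> carrier G" shows "P (beta g ys) = g \<otimes> P ys"
  using assms tau_car[OF assms(1)] P_car[OF assms(2)] by (simp add: beta_def m_assoc)

lemma P_alpha: assumes "x \<in> XX" shows "P x = fst (alpha K x) \<otimes> P (snd (alpha K x))"
proof -
  obtain c ss where x: "x = c # ss" "c \<in> C" "alt ss" using assms XX_cases by blast
  have cs: "set ss \<subseteq> carrier G" using alt_AB[OF x(3)] AB_car by blast
  show ?thesis
  proof (cases ss)
    case Nil then show ?thesis using x by simp
  next
    case (Cons s ss')
    then show ?thesis using x cs C_car P_car by (auto simp: m_assoc)
  qed
qed

lemma P_lact: assumes "l \<in> A \<union> B" "x \<in> XX" shows "P (lact l x) = l \<otimes> P x"
proof -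
  let ?K = "ty l"
  have a: "fst (alpha ?K x) \<in> fac ?K" "alt (snd (alpha ?K x))" using alpha_X[OF assms(2)] by auto
  have c: "fst (alpha ?K x) \<in> carrier G" "set (snd (alpha ?K x)) \<subseteq> carrier G"
    using a fac_car alt_AB AB_car by blast+
  have l: "l \<in> carrier G" using let_car assms by blast
  have "P (lact l x) = (l \<otimes> fst (alpha ?K x)) \<otimes> P (snd (alpha ?K x))"
    unfolding lact_def act_def using P_beta c l by simp
  also have "\<dots> = l \<otimes> P x" using P_alpha[OF assms(2), of ?K] c l P_car by (simp add: m_assoc)
  finally show ?thesis .
qed

lemma P_Act: assumes "set ys \<subseteq> A \<union> B" "x \<in> XX" shows "P (Act ys x) = P ys \<otimes> P x"
  using assms(1)
proof (induction ys)
  case Nil then show ?case using P_car XX_car assms by (simp add: Act_def)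
next
  case (Cons l ys)
  have Z: "Act ys x \<in> XX" using Act_X Cons assms by auto
  have "P (Act (l # ys) x) = l \<otimes> P (Act ys x)" using P_lact Cons Z by (simp add: Act_def)
  then show ?case using Cons P_car XX_car assms AB_car let_car by (simp add: m_assoc)
qed

lemma P_hN: assumes "g \<in> carrier G" shows "P (hN g) = g"
proof -
  have "g \<in> generate G (A \<union> B)" using gen assms by simp
  then show ?thesis
  proof (induction rule: generate.induct)
    case one then show ?case using hN_one by simp
  next
    case (incl h)
    then show ?case using hN_let P_lact e_X let_car by simp
  next
    case (inv h)
    then have "inv h \<in> A \<union> B" using A_inv B_inv by blast
    then show ?case using hN_let P_lact e_X let_car by simp
  next
    case (eng h1 h2)
    have c: "h1 \<in> carrier G" "h2 \<in> carrier G" using eng gen by auto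
    then have "P (hN (h1 \<otimes> h2)) = P (hN h1) \<otimes> P (hN h2)"
      using hN_mult P_Act XX_AB hN_X by simp
    then show ?case using eng by simp
  qed
qed

lemma hN_inj: "g \<in> carrier G \<Longrightarrow> g' \<in> carrier G \<Longrightarrow> hN g = hN g' \<Longrightarrow> g = g'"
  using P_hN by metis

lemma hN_P_list: assumes "set ys \<subseteq> A \<union> B" shows "hN (P ys) = Act ys [\<one>]"
  using assms
proof (induction ys)
  case Nil then show ?case using hN_one by (simp add: Act_def)
next
  case (Cons l ys)
  then have "hN (P (l # ys)) = lact l (hN (P ys))"
    using hN_let_mult P_car AB_car by simp
  then show ?case using Cons by (simp add: Act_def)
qed

lemma hN_P: assumes "x \<in> XX" shows "hN (P x) = x"
  using hN_P_list[OF XX_AB[OF assms]] Act_e[OF assms] by simp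

definition st :: "bool \<Rightarrow> 'a \<Rightarrow> bool" where
  "st K g \<longleftrightarrow> (\<exists>c s ss. hN g = c # s # ss \<and> ty s = K)"
definition ns :: "bool \<Rightarrow> 'a \<Rightarrow> bool" where
  "ns K g \<longleftrightarrow> (\<exists>c ss. hN g = c # ss \<and> nost K ss)"

lemma ns_one: "ns K \<one>" using hN_one by (simp add: ns_def)
lemma st_ns: "st K g \<Longrightarrow> ns (\<not> K) g" by (auto simp: st_def ns_def)
lemma st_ne_one: "st K g \<Longrightarrow> g \<noteq> \<one>" using hN_one by (auto simp: st_def)
lemma st_notC: assumes "st K g" shows "g \<notin> C"
proof
  assume "g \<in> C"
  then have "hN g = [g]" using hN_let act_C CA C_car by (simp add: lact_def ty_def)
  then show False using assms by (simp add: st_def)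
qed

lemma prep1: assumes "l \<in> fac K" "l \<notin> C" "g \<in> carrier G" "ns K g" shows "st K (l \<otimes> g)"
proof -
  obtain c ss where h: "hN g = c # ss" "nost K ss" using assms by (auto simp: ns_def)
  have c: "c \<in> C" using hN_X[OF assms(3)] h by simp
  have l: "l \<in> carrier G" "l \<in> A \<union> B" "ty l = K" using assms fac_car typ_fac by (auto simp: fac_def split: if_splits)
  have lc: "l \<otimes> c \<notin> C"
  proof
    assume "l \<otimes> c \<in> C"
    then have "(l \<otimes> c) \<otimes> inv c \<in> C" using C_mult C_inv c by blast
    then show False using l c C_car assms by simp
  qed
  have lcf: "l \<otimes> c \<in> fac K" using assms C_fac c fac_mult by blast
  have "hN (l \<otimes> g) = lact l (c # ss)" using hN_let_mult l assms h by simp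
  also have "\<dots> = beta (l \<otimes> c) ss" using alpha_nost[OF h(2)] l by (simp add: lact_def act_def)
  also have "\<dots> = (l \<otimes> c \<otimes> inv (tau (l \<otimes> c))) # tau (l \<otimes> c) # ss" using lc by (simp add: beta_def)
  finally have "hN (l \<otimes> g) = (l \<otimes> c \<otimes> inv (tau (l \<otimes> c))) # tau (l \<otimes> c) # ss" .
  moreover have "ty (tau (l \<otimes> c)) = K"
    using tau_fac[OF lcf] tau_notC[OF fac_car[OF lcf] lc] typ_fac by blast
  ultimately show ?thesis by (auto simp: st_def)
qed

definition alt2 :: "'a list \<Rightarrow> bool" where
  "alt2 ys \<longleftrightarrow> (\<forall>y\<in>set ys. y \<in> A \<union> B \<and> y \<notin> C) \<and> successively (\<lambda>s t. ty s \<noteq> ty t) ys"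

lemma alt2_Cons: "alt2 (y # ys) \<longleftrightarrow> y \<in> A \<union> B \<and> y \<notin> C \<and> alt2 ys \<and> (ys = [] \<or> ty y \<noteq> ty (hd ys))"
  by (auto simp: alt2_def successively_Cons)

lemma alt2_car: "alt2 ys \<Longrightarrow> set ys \<subseteq> carrier G" using let_car by (auto simp: alt2_def)

lemma prep: assumes "alt2 ys" "ys \<noteq> []" "g \<in> carrier G" "ns (ty (last ys)) g"
  shows "st (ty (hd ys)) (P ys \<otimes> g)"
  using assms
proof (induction ys)
  case Nil then show ?case by simp
next
  case (Cons y ys)
  have y: "y \<in> A \<union> B" "y \<notin> C" "y \<in> carrier G" using Cons alt2_Cons let_car by auto
  have yf: "y \<in> fac (ty y)" using fac_typ y by blast
  show ?case
  proof (cases "ys = []")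
    case True
    then show ?thesis using prep1[OF yf y(2) Cons(4)] Cons y by simp
  next
    case False
    have a: "alt2 ys" "ty y \<noteq> ty (hd ys)" using Cons alt2_Cons False by auto
    have IH: "st (ty (hd ys)) (P ys \<otimes> g)" using Cons a False by simp
    have pc: "P ys \<otimes> g \<in> carrier G" using P_car alt2_car a Cons by simp
    have "ns (ty y) (P ys \<otimes> g)" using st_ns[OF IH] a by simp
    then have "st (ty y) (y \<otimes> (P ys \<otimes> g))" using prep1[OF yf y(2) pc] by simp
    then show ?thesis using y P_car alt2_car a Cons by (simp add: m_assoc)
  qed
qed

end

context amal
begin

definition W :: "'a \<Rightarrow> (int \<times> 'a) list \<Rightarrow> 'a" where
  "W x ws = foldr (\<lambda>p acc. x [^] fst p \<otimes> snd p \<otimes> acc) ws \<one>"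
definition nd :: "int \<times> 'a \<Rightarrow> int \<times> 'a \<Rightarrow> bool" where
  "nd p q \<longleftrightarrow> (fst p = - fst q \<longrightarrow> snd p \<noteq> \<one>)"
definition cnt :: "int \<Rightarrow> (int \<times> 'a) list \<Rightarrow> nat" where
  "cnt v ws = length (filter (\<lambda>p. fst p = v) ws)"

definition RFl :: "enat \<Rightarrow> 'a \<Rightarrow> bool" where
  "RFl n x \<longleftrightarrow> (\<forall>ws. ws \<noteq> [] \<longrightarrow> (\<forall>p\<in>set ws. fst p \<in> {1,-1} \<and> snd p \<in> C) \<longrightarrow>
     successively nd ws \<longrightarrow> nd (last ws) (hd ws) \<longrightarrow> enat (cnt 1 ws) < n \<longrightarrow> enat (cnt (-1) ws) < n \<longrightarrow>
     W x ws \<noteq> \<one>)"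

lemma W_Nil[simp]: "W x [] = \<one>" by (simp add: W_def)
lemma W_Cons[simp]: "W x (p # ws) = x [^] fst p \<otimes> snd p \<otimes> W x ws" by (simp add: W_def)

lemma W_car: "x \<in> carrier G \<Longrightarrow> \<forall>p\<in>set ws. snd p \<in> carrier G \<Longrightarrow> W x ws \<in> carrier G"
  by (induction ws) auto

lemma W_append: assumes "x \<in> carrier G" "\<forall>p\<in>set ws1. snd p \<in> carrier G" "\<forall>p\<in>set ws2. snd p \<in> carrier G"
  shows "W x (ws1 @ ws2) = W x ws1 \<otimes> W x ws2"
  using assms(2)
proof (induction ws1)
  case Nil then show ?case using W_car assms by simp
next
  case (Cons p ws1)
  then show ?case using W_car assms by (simp add: m_assoc)
qed

lemma W_fac: assumes "x \<in> fac F" "\<forall>p\<in>set ws. snd p \<in> C" shows "W x ws \<in> fac F"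
  using assms(2)
proof (induction ws)
  case Nil then show ?case by simp
next
  case (Cons p ws)
  have "x [^] fst p \<in> fac F" using subgroup_int_pow_closed[OF fac_sub assms(1)] .
  then show ?case using Cons C_fac fac_mult by simp
qed

lemma rf_word_W: "rf_word G a k e d = W a (map (\<lambda>i. (e i, d i)) [0..<k])"
  by (simp add: rf_word_def W_def foldr_map o_def)

lemma rf_word_sub: assumes "x \<in> fac F"
  shows "rf_word (G\<lparr>carrier := fac F\<rparr>) x k e d = rf_word G x k e d"
  unfolding rf_word_def using int_pow_consistent[OF fac_sub assms, symmetric] by simp

lemma cnt_map: "cnt v (map (\<lambda>i. (e i, d i)) [0..<k]) = card {i. i < k \<and> e i = v}"
  unfolding cnt_def length_filter_conv_card by (rule arg_cong[where f=card]) auto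

lemma RFl_from: assumes "x \<in> fac F" "n_RF_rel (G\<lparr>carrier := fac F\<rparr>) C n x" shows "RFl n x"
  unfolding RFl_def
proof (intro allI impI)
  fix ws :: "(int \<times> 'a) list"
  assume ne: "ws \<noteq> []" and el: "\<forall>p\<in>set ws. fst p \<in> {1, - 1} \<and> snd p \<in> C"
    and sc: "successively nd ws" and wr: "nd (last ws) (hd ws)"
    and c1: "enat (cnt 1 ws) < n" and c2: "enat (cnt (- 1) ws) < n"
  define k where "k = length ws"
  define e where "e i = fst (ws ! i)" for i
  define d where "d i = snd (ws ! i)" for i
  have ws: "ws = map (\<lambda>i. (e i, d i)) [0..<k]"
    unfolding k_def e_def d_def by (rule nth_equalityI) auto
  have k1: "1 \<le> k" using ne k_def by (cases ws) auto
  have h1: "\<forall>i<k. e i \<in> {1, -1} \<and> d i \<in> C"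
  proof (intro allI impI)
    fix i assume "i < k"
    then have "ws ! i \<in> set ws" using k_def by simp
    then show "e i \<in> {1, -1} \<and> d i \<in> C" using el by (simp add: e_def d_def)
  qed
  have h2: "\<forall>i<k. e i = - e (Suc i mod k) \<longrightarrow> d i \<noteq> \<one>"
  proof (intro allI impI)
    fix i assume i: "i < k" and ee: "e i = - e (Suc i mod k)"
    show "d i \<noteq> \<one>"
    proof (cases "Suc i < k")
      case True
      then have "nd (ws ! i) (ws ! Suc i)" using successively_nth[OF sc] k_def by simp
      then show ?thesis using ee True by (simp add: nd_def e_def d_def)
    next
      case False
      then have "Suc i = k" using i by simp
      then have "last ws = ws ! i" "hd ws = ws ! 0" "Suc i mod k = 0"
        using ne k_def by (auto simp: last_conv_nth hd_conv_nth simp del: Suc_length_conv dest: sym)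
      then show ?thesis using wr ee by (simp add: nd_def e_def d_def)
    qed
  qed
  have h3: "enat (card {i. i < k \<and> e i = 1}) < n" using c1 cnt_map[of 1 e d k] ws by simp
  have h4: "enat (card {i. i < k \<and> e i = -1}) < n" using c2 cnt_map[of "-1" e d k] ws by simp
  have "rf_word (G\<lparr>carrier := fac F\<rparr>) x k e d \<noteq> \<one>\<^bsub>G\<lparr>carrier := fac F\<rparr>\<^esub>"
  proof -
    have "\<forall>(k::nat) (e::nat \<Rightarrow> int) (d::nat \<Rightarrow> 'a).
        1 \<le> k \<longrightarrow>
        (\<forall>i<k. e i \<in> {1, -1} \<and> d i \<in> C) \<longrightarrow>
        (\<forall>i<k. e i = - e (Suc i mod k) \<longrightarrow> d i \<noteq> \<one>\<^bsub>G\<lparr>carrier := fac F\<rparr>\<^esub>) \<longrightarrow>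
        enat (card {i. i < k \<and> e i = 1}) < n \<longrightarrow>
        enat (card {i. i < k \<and> e i = -1}) < n \<longrightarrow>
        rf_word (G\<lparr>carrier := fac F\<rparr>) x k e d \<noteq> \<one>\<^bsub>G\<lparr>carrier := fac F\<rparr>\<^esub>"
      using assms(2) unfolding n_RF_rel_def by (rule conjunct2)
    then have "1 \<le> k \<longrightarrow>
        (\<forall>i<k. e i \<in> {1, -1} \<and> d i \<in> C) \<longrightarrow>
        (\<forall>i<k. e i = - e (Suc i mod k) \<longrightarrow> d i \<noteq> \<one>\<^bsub>G\<lparr>carrier := fac F\<rparr>\<^esub>) \<longrightarrow>
        enat (card {i. i < k \<and> e i = 1}) < n \<longrightarrow>
        enat (card {i. i < k \<and> e i = -1}) < n \<longrightarrow>
        rf_word (G\<lparr>carrier := fac F\<rparr>) x k e d \<noteq> \<one>\<^bsub>G\<lparr>carrier := fac F\<rparr>\<^esub>"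
      by (elim allE)
    then show ?thesis using k1 h1 h2 h3 h4 by simp
  qed
  then show "W x ws \<noteq> \<one>" using rf_word_sub[OF assms(1)] rf_word_W ws by simp
qed

lemma cnt_le_sub: "cnt v ws \<le> cnt v (as @ ws @ bs)" by (simp add: cnt_def)

lemma segS: assumes RF: "RFl n x" and x: "x \<in> carrier G" "x \<notin> C"
  shows "ws \<noteq> [] \<Longrightarrow> \<forall>p\<in>set ws. fst p \<in> {1,-1} \<and> snd p \<in> C \<Longrightarrow> successively nd ws \<Longrightarrow>
    enat (cnt 1 ws) < n \<Longrightarrow> enat (cnt (-1) ws) < n \<Longrightarrow> W x ws \<notin> C"
proof (induction ws rule: length_induct)
  case (1 ws)
  note IH = 1(1)
  show ?case
  proof
    assume Wc: "W x ws \<in> C"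
    obtain init q where wsq: "ws = init @ [q]" using 1(2) by (metis rev_exhaust)
    obtain eq dq where q: "q = (eq, dq)" by (cases q)
    let ?c = "W x ws"
    have cc: "?c \<in> carrier G" using Wc C_car by blast
    have elC: "\<forall>p\<in>set ws. snd p \<in> carrier G" using 1(3) C_car by blast
    define ws2 where "ws2 = init @ [(eq, dq \<otimes> inv ?c)]"
    have dq: "dq \<in> C" "eq \<in> {1,-1}" using 1(3) wsq q by auto
    have dqc: "dq \<otimes> inv ?c \<in> C" using dq C_mult C_inv Wc by blast
    have el2: "\<forall>p\<in>set ws2. fst p \<in> {1,-1} \<and> snd p \<in> C" using 1(3) wsq dq dqc ws2_def by auto
    have elinit: "\<forall>p\<in>set init. snd p \<in> carrier G" using elC wsq by auto
    have "W x ws2 = W x init \<otimes> (x [^] eq \<otimes> (dq \<otimes> inv ?c))"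
      unfolding ws2_def using W_append[OF x(1) elinit] C_car[OF dqc] x(1) by simp
    also have "\<dots> = (W x init \<otimes> (x [^] eq \<otimes> dq)) \<otimes> inv ?c"
      using W_car[OF x(1) elinit] x dq C_car cc by (simp add: m_assoc)
    also have "W x init \<otimes> (x [^] eq \<otimes> dq) = ?c"
      using W_append[OF x(1) elinit] C_car[OF dq(1)] x(1) wsq q by simp
    finally have W2: "W x ws2 = \<one>" using cc by simp
    have sc2: "successively nd ws2"
      using 1(4) unfolding ws2_def wsq q by (auto simp: successively_append_iff nd_def)
    have cnt2: "cnt v ws2 = cnt v ws" for v unfolding ws2_def wsq q by (simp add: cnt_def)
    have "\<not> nd (last ws2) (hd ws2)"
      using RF W2 el2 sc2 cnt2 1(5,6) unfolding RFl_def ws2_def by auto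
    then have bad: "fst (last ws2) = - fst (hd ws2)" "dq \<otimes> inv ?c = \<one>"
      unfolding nd_def ws2_def by auto
    show False
    proof (cases init)
      case Nil
      then show False using bad dq by (auto simp: ws2_def)
    next
      case (Cons p1 mid)
      obtain e1 d1 where p1: "p1 = (e1, d1)" by (cases p1)
      have eq: "eq = - e1" using bad Cons p1 by (simp add: ws2_def)
      have dqe: "dq = ?c" using bad dq C_car cc by (metis inv_closed inv_inv local.inv_equality)
      have d1: "d1 \<in> C" "e1 \<in> {1,-1}" using 1(3) wsq Cons p1 by auto
      have elmid: "\<forall>p\<in>set mid. snd p \<in> carrier G" using elC wsq Cons by auto
      have Wm: "W x mid \<in> carrier G" using W_car[OF x(1) elmid] .
      have xe: "x [^] e1 \<in> carrier G" using x by simp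
      have "?c = x [^] e1 \<otimes> d1 \<otimes> (W x mid \<otimes> (x [^] eq \<otimes> dq))"
        using W_append[OF x(1) elmid] C_car[OF dq(1)] x(1) wsq q Cons p1 by simp
      then have "?c = (x [^] e1 \<otimes> (d1 \<otimes> W x mid) \<otimes> inv (x [^] e1)) \<otimes> ?c"
        using dqe eq x d1 C_car Wm cc xe by (simp add: int_pow_neg m_assoc)
      then have "x [^] e1 \<otimes> (d1 \<otimes> W x mid) \<otimes> inv (x [^] e1) = \<one>"
        using cc d1 C_car Wm xe by (metis inv_closed l_one m_closed right_cancel one_closed)
      then have "x [^] e1 \<otimes> (d1 \<otimes> W x mid) = x [^] e1"
        using cc d1 C_car Wm xe by (metis inv_closed m_closed right_cancel r_inv)
      then have dW: "d1 \<otimes> W x mid = \<one>"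
        using d1 C_car Wm xe by (metis m_closed one_closed r_one l_cancel)
      show False
      proof (cases mid)
        case Nil
        then have "d1 = \<one>" using dW d1 C_car by simp
        moreover have "nd p1 q" using 1(4) wsq Cons Nil by simp
        ultimately show False using eq p1 q by (simp add: nd_def)
      next
        case (Cons p2 mid')
        have "W x mid = inv d1" using dW d1 C_car Wm by (metis inv_equality inv_closed inv_inv r_inv l_cancel m_closed one_closed)
        then have WmC: "W x mid \<in> C" using d1 C_inv by simp
        have len: "length mid < length ws" using wsq \<open>init = p1 # mid\<close> by simp
        have "mid \<noteq> []" using Cons by simp
        moreover have "\<forall>p\<in>set mid. fst p \<in> {1,-1} \<and> snd p \<in> C" using 1(3) wsq \<open>init = p1 # mid\<close> by auto
        moreover have "successively nd mid"
          using 1(4) wsq \<open>init = p1 # mid\<close> by (simp add: successively_append_iff successively_Cons)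
        moreover have "cnt v mid \<le> cnt v ws" for v
          using cnt_le_sub[of v mid "[p1]" "[q]"] wsq \<open>init = p1 # mid\<close> by simp
        then have "enat (cnt 1 mid) < n" "enat (cnt (-1) mid) < n"
          using 1(5,6) by (meson enat_ord_simps(1) le_less_trans)+
        ultimately have "W x mid \<notin> C" using IH len by blast
        then show False using WmC by simp
      qed
    qed
  qed
qed


definition pat :: "bool \<Rightarrow> 'a \<Rightarrow> bool" where
  "pat F J \<longleftrightarrow> (\<exists>ys. alt2 ys \<and> ys \<noteq> [] \<and> J = P ys \<and> ty (hd ys) = (\<not> F) \<and> ty (last ys) = (\<not> F))"

lemma segL: assumes RF: "RFl n x" and x: "x \<in> fac F" "x \<notin> C"
  shows "ws \<noteq> [] \<Longrightarrow> \<forall>p\<in>set ws. fst p \<in> {1,-1} \<and> snd p \<in> carrier G \<and> (snd p \<in> C \<or> pat F (snd p)) \<Longrightarrow>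
    snd (last ws) \<notin> C \<Longrightarrow> successively nd ws \<Longrightarrow>
    enat (cnt 1 ws) < n \<Longrightarrow> enat (cnt (-1) ws) < n \<Longrightarrow> st F (W x ws)"
proof (induction ws rule: length_induct)
  case (1 ws)
  note IH = 1(1)
  have xc: "x \<in> carrier G" using x fac_car by blast
  define seg where "seg = takeWhile (\<lambda>p. snd p \<in> C) ws"
  define r0 where "r0 = dropWhile (\<lambda>p. snd p \<in> C) ws"
  have r0ne: "r0 \<noteq> []"
  proof
    assume "r0 = []"
    then have "\<forall>p\<in>set ws. snd p \<in> C" unfolding r0_def by (simp add: dropWhile_eq_Nil_conv)
    then show False using 1(2,4) by simp
  qed
  then obtain q rest where r0: "r0 = q # rest" by (cases r0) auto
  have qC: "snd q \<notin> C"
  proof -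
    have "last ws \<in> set ws" using 1(2) by simp
    then show ?thesis using hd_dropWhile[of "\<lambda>p. snd p \<in> C" ws] r0ne r0 r0_def 1(4) by auto
  qed
  have wsd: "ws = seg @ q # rest"
    using takeWhile_dropWhile_id[of "\<lambda>p. snd p \<in> C" ws] r0 unfolding seg_def r0_def by metis
  have segC: "\<forall>p\<in>set seg. snd p \<in> C" unfolding seg_def by (auto dest: set_takeWhileD)
  have elws: "\<forall>p\<in>set ws. snd p \<in> carrier G" using 1(3) by blast
  have q: "fst q \<in> {1,-1}" "snd q \<in> carrier G" "pat F (snd q)" using 1(3) wsd qC by auto
  have scs: "successively nd seg" "successively nd (q # rest)" "seg = [] \<or> nd (last seg) q"
    using 1(5) wsd by (auto simp: successively_append_iff)
  let ?sg = "seg @ [(fst q, \<one>)]"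
  have sgC: "\<forall>p\<in>set ?sg. fst p \<in> {1,-1} \<and> snd p \<in> C" using segC 1(3) wsd q by auto
  have scsg: "successively nd ?sg" using scs by (auto simp: successively_append_iff nd_def)
  have cntsg: "cnt v ?sg \<le> cnt v ws" for v using wsd by (simp add: cnt_def)
  have c1: "enat (cnt 1 ?sg) < n" "enat (cnt (-1) ?sg) < n"
    using cntsg 1(6,7) by (meson enat_ord_simps(1) le_less_trans)+
  have SnC: "W x ?sg \<notin> C" using segS[OF RF xc x(2) _ sgC scsg c1] by simp
  have Sf: "W x ?sg \<in> fac F" using W_fac[OF x(1)] sgC by blast
  have elseg: "\<forall>p\<in>set seg. snd p \<in> carrier G" "\<forall>p\<in>set rest. snd p \<in> carrier G"
    using elws wsd by auto
  have Sc: "W x seg \<in> carrier G" using W_car[OF xc elseg(1)] .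
  have Qc: "W x rest \<in> carrier G" using W_car[OF xc elseg(2)] .
  have Weq: "W x ws = W x ?sg \<otimes> (snd q \<otimes> W x rest)"
    using W_append[OF xc elseg(1)] elseg q(2) Sc Qc xc wsd by (simp add: m_assoc)
  have nsQ: "ns (\<not> F) (W x rest)"
  proof (cases "rest = []")
    case True then show ?thesis using ns_one by simp
  next
    case False
    have "length rest < length ws" using wsd by simp
    moreover have "\<forall>p\<in>set rest. fst p \<in> {1,-1} \<and> snd p \<in> carrier G \<and> (snd p \<in> C \<or> pat F (snd p))"
      using 1(3) wsd by auto
    moreover have "snd (last rest) \<notin> C" using 1(4) wsd False by simp
    moreover have "successively nd rest" using scs(2) by (auto simp: successively_Cons)
    moreover have "cnt v rest \<le> cnt v ws" for v using wsd by (simp add: cnt_def)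
    then have "enat (cnt 1 rest) < n" "enat (cnt (-1) rest) < n"
      using 1(6,7) by (meson enat_ord_simps(1) le_less_trans)+
    ultimately have "st F (W x rest)" using IH False by blast
    then show ?thesis using st_ns by blast
  qed
  obtain ys where ys: "alt2 ys" "ys \<noteq> []" "snd q = P ys" "ty (hd ys) = (\<not> F)" "ty (last ys) = (\<not> F)"
    using q(3) by (auto simp: pat_def)
  have "st (\<not> F) (snd q \<otimes> W x rest)" using prep[OF ys(1,2) Qc] ys nsQ by simp
  then have "ns F (snd q \<otimes> W x rest)" using st_ns by fastforce
  then have "st F (W x ?sg \<otimes> (snd q \<otimes> W x rest))" using prep1[OF Sf SnC] q(2) Qc by simp
  then show ?case using Weq by simp
qed

end

context amal
begin

lemma alt_alt2: "alt ss \<Longrightarrow> alt2 ss" by (auto simp: alt_def alt2_def sy_def)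

lemma alt2_append: "alt2 (xs @ ys) \<longleftrightarrow> alt2 xs \<and> alt2 ys \<and> (xs = [] \<or> ys = [] \<or> ty (last xs) \<noteq> ty (hd ys))"
  by (auto simp: alt2_def successively_append_iff)

lemma alt2_single: "alt2 [y] \<longleftrightarrow> y \<in> A \<union> B \<and> y \<notin> C" by (simp add: alt2_def)

lemma alt2_parity: assumes "alt2 ms" "i < length ms"
  shows "ty (ms ! i) = (if even i then ty (ms ! 0) else \<not> ty (ms ! 0))"
  using assms(2)
proof (induction i)
  case 0 then show ?case by simp
next
  case (Suc i)
  have "ty (ms ! i) \<noteq> ty (ms ! Suc i)"
    using successively_nth[of "\<lambda>s t. ty s \<noteq> ty t" ms i] assms(1) Suc by (simp add: alt2_def)
  then show ?case using Suc by auto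
qed

lemma alt2_fac: "alt2 ys \<Longrightarrow> y \<in> set ys \<Longrightarrow> y \<in> fac (ty y)" using fac_typ by (auto simp: alt2_def)

lemma decomp: assumes a: "a \<in> carrier G" "a \<notin> A"
  shows "\<exists>\<alpha> \<beta> us x vs. \<alpha> \<in> A \<and> \<beta> \<in> A \<and> alt2 (us @ x # vs) \<and> length us = length vs \<and>
     \<not> ty (hd (us @ x # vs)) \<and> \<not> ty (last (us @ x # vs)) \<and> a = \<alpha> \<otimes> P us \<otimes> x \<otimes> P vs \<otimes> \<beta>"
proof -
  obtain c ss where h: "hN a = c # ss" "c \<in> C" "alt ss" using hN_X[OF a(1)] XX_cases by blast
  have ssc: "set ss \<subseteq> carrier G" using alt_AB[OF h(3)] AB_car by blast
  have cc: "c \<in> carrier G" using h C_car by blast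
  have aeq: "a = c \<otimes> P ss" using P_hN[OF a(1)] h by simp
  have ssne: "ss \<noteq> []"
  proof
    assume "ss = []"
    then have "a = c" using aeq cc by simp
    then show False using a h CA by simp
  qed
  obtain \<alpha>1 ss1 where A1: "\<alpha>1 \<in> A" "alt2 ss1" "ss1 \<noteq> []" "\<not> ty (hd ss1)" "a = \<alpha>1 \<otimes> P ss1"
  proof (cases "ty (hd ss)")
    case True
    obtain s ss' where ss: "ss = s # ss'" using ssne by (cases ss) auto
    have s: "sy s" "alt ss'" "nost (ty s) ss'" using h ss alt_Cons by auto
    have sA: "s \<in> A" using True ss by (simp add: ty_def)
    have scar: "s \<in> carrier G" "set ss' \<subseteq> carrier G" using sy_car s ssc ss by auto
    have "ss' \<noteq> []"
    proof
      assume "ss' = []"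
      then have "a = c \<otimes> s" using aeq ss scar cc by simp
      then show False using a CA h sA A_mult by simp
    qed
    moreover have "\<not> ty (hd ss')" using s True ss \<open>ss' \<noteq> []\<close> by (simp add: nost_def)
    moreover have "a = (c \<otimes> s) \<otimes> P ss'" using aeq ss scar cc P_car by (simp add: m_assoc)
    ultimately show ?thesis using that[of "c \<otimes> s" ss'] CA h sA A_mult alt_alt2 s by blast
  next
    case False
    then show ?thesis using that[of c ss] CA h ssne aeq alt_alt2 by blast
  qed
  have ss1c: "set ss1 \<subseteq> carrier G" using alt2_car A1 by blast
  obtain ms \<beta> where B1: "\<beta> \<in> A" "alt2 ms" "ms \<noteq> []" "\<not> ty (hd ms)" "\<not> ty (last ms)" "P ss1 = P ms \<otimes> \<beta>"
  proof (cases "ty (last ss1)")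
    case True
    obtain ms s where ss1: "ss1 = ms @ [s]" using A1(3) by (metis rev_exhaust)
    have msne: "ms \<noteq> []" using ss1 True A1(4) by auto
    have al: "alt2 ms" "alt2 [s]" "ty (last ms) \<noteq> ty s" using A1(2) ss1 msne alt2_append by auto
    have sA: "s \<in> A" using True ss1 by (simp add: ty_def)
    have "P ss1 = P ms \<otimes> s" using ss1 ss1c P_append[of ms "[s]"] by simp
    then show ?thesis using that[of s ms] sA al msne A1(4) ss1 True by simp
  next
    case False
    then show ?thesis using that[of "\<one>" ss1] A1 P_car ss1c by simp
  qed
  have msc: "set ms \<subseteq> carrier G" using alt2_car B1 by blast
  define L where "L = length ms"
  have L: "L \<ge> 1" using B1(3) L_def by (cases ms) auto
  have "ty (ms ! (L - 1)) = (if even (L - 1) then ty (ms ! 0) else \<not> ty (ms ! 0))"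
    using alt2_parity[OF B1(2), of "L - 1"] L L_def by simp
  moreover have "ms ! (L - 1) = last ms" "ms ! 0 = hd ms" using B1(3) L_def by (auto simp: last_conv_nth hd_conv_nth)
  ultimately have ev: "even (L - 1)" using B1(4,5) by auto
  define r where "r = (L - 1) div 2"
  have Lr: "L = Suc (2 * r)" using ev L r_def by auto
  define us where "us = take r ms"
  define x where "x = ms ! r"
  define vs where "vs = drop (Suc r) ms"
  have msd: "ms = us @ x # vs" using id_take_nth_drop[of r ms] Lr L_def unfolding us_def x_def vs_def by simp
  have len: "length us = length vs" unfolding us_def vs_def using Lr L_def by simp
  have c3: "set us \<subseteq> carrier G" "x \<in> carrier G" "set vs \<subseteq> carrier G" using msc msd by auto
  have "a = \<alpha>1 \<otimes> (P us \<otimes> (x \<otimes> P vs)) \<otimes> \<beta>"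
    using A1(5) B1(6) msd c3 P_append[of us "x # vs"] P_car[OF c3(1)] P_car[OF c3(3)] A_car[OF A1(1)] A_car[OF B1(1)]
    by (simp add: m_assoc)
  also have "\<dots> = \<alpha>1 \<otimes> P us \<otimes> x \<otimes> P vs \<otimes> \<beta>"
    using c3 P_car[OF c3(1)] P_car[OF c3(3)] A_car[OF A1(1)] A_car[OF B1(1)] by (simp add: m_assoc)
  finally show ?thesis using A1(1) B1 msd len by blast
qed

lemma jlem: "length ps = m \<Longrightarrow> alt2 ps \<Longrightarrow> alt2 qs \<Longrightarrow> length qs = m \<Longrightarrow> \<delta> \<in> fac K \<Longrightarrow>
   (ps \<noteq> [] \<longrightarrow> ty (last ps) = (\<not> K) \<and> ty (hd qs) = (\<not> K)) \<Longrightarrow>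
   P ps \<otimes> \<delta> \<otimes> P qs \<in> C \<or>
   (\<exists>ys. alt2 ys \<and> ys \<noteq> [] \<and> P ps \<otimes> \<delta> \<otimes> P qs = P ys \<and>
      ty (hd ys) = (if ps = [] then K else ty (hd ps)) \<and> ty (last ys) = (if qs = [] then K else ty (last qs)))"
proof (induction m arbitrary: ps qs \<delta> K)
  case 0
  then have pq: "ps = []" "qs = []" by auto
  have dc: "\<delta> \<in> carrier G" using 0 fac_car by blast
  show ?case
  proof (cases "\<delta> \<in> C")
    case True then show ?thesis using pq dc by simp
  next
    case False
    have "\<delta> \<in> A \<union> B" using 0 by (auto simp: fac_def split: if_splits)
    then have "alt2 [\<delta>]" using False alt2_single by blast
    moreover have "ty \<delta> = K" using typ_fac 0 False by blast
    ultimately show ?thesis using pq dc by (intro disjI2 exI[of _ "[\<delta>]"]) simp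
  qed
next
  case (Suc m)
  have pne: "ps \<noteq> []" "qs \<noteq> []" using Suc by auto
  obtain ps' p where ps: "ps = ps' @ [p]" using pne by (metis rev_exhaust)
  obtain q qs' where qs: "qs = q # qs'" using pne by (cases qs) auto
  have tys: "ty (last ps) = (\<not> K)" "ty (hd qs) = (\<not> K)" using Suc pne by auto
  have pc: "set ps \<subseteq> carrier G" "set qs \<subseteq> carrier G" using alt2_car Suc by auto
  have dc: "\<delta> \<in> carrier G" using Suc fac_car by blast
  show ?case
  proof (cases "\<delta> \<in> C")
    case False
    have dAB: "\<delta> \<in> A \<union> B" using Suc by (auto simp: fac_def split: if_splits)
    have tyd: "ty \<delta> = K" using typ_fac Suc False by blast
    have "alt2 (\<delta> # qs)" using alt2_Cons dAB False Suc tyd tys pne by auto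
    then have al: "alt2 (ps @ \<delta> # qs)" using alt2_append Suc tyd tys by auto
    have "P (ps @ \<delta> # qs) = P ps \<otimes> \<delta> \<otimes> P qs" using P_append[of ps "\<delta> # qs"] pc dc P_car by (simp add: m_assoc)
    then show ?thesis using al pne by (intro disjI2 exI[of _ "ps @ \<delta> # qs"]) simp
  next
    case True
    have pp: "alt2 ps'" "alt2 [p]" "ps' = [] \<or> ty (last ps') \<noteq> ty p" using Suc(3) ps alt2_append by auto
    have qq: "q \<in> A \<union> B" "alt2 qs'" "qs' = [] \<or> ty q \<noteq> ty (hd qs')" using Suc(4) qs alt2_Cons by auto
    have pAB: "p \<in> A \<union> B" using pp alt2_single by blast
    have tp: "ty p = (\<not> K)" "ty q = (\<not> K)" using tys ps qs by auto
    have pf: "p \<in> fac (\<not> K)" "q \<in> fac (\<not> K)" using fac_typ[OF pAB] fac_typ[OF qq(1)] tp by simp_all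
    have df: "p \<otimes> \<delta> \<otimes> q \<in> fac (\<not> K)" using pf C_fac True fac_mult by blast
    have lens: "length ps' = m" "length qs' = m" using Suc ps qs by auto
    have cond: "ps' \<noteq> [] \<longrightarrow> ty (last ps') = (\<not> \<not> K) \<and> ty (hd qs') = (\<not> \<not> K)"
      using pp qq tp lens by auto
    have IH: "P ps' \<otimes> (p \<otimes> \<delta> \<otimes> q) \<otimes> P qs' \<in> C \<or>
      (\<exists>ys. alt2 ys \<and> ys \<noteq> [] \<and> P ps' \<otimes> (p \<otimes> \<delta> \<otimes> q) \<otimes> P qs' = P ys \<and>
        ty (hd ys) = (if ps' = [] then \<not> K else ty (hd ps')) \<and> ty (last ys) = (if qs' = [] then \<not> K else ty (last qs')))"
      using Suc.IH[OF lens(1) pp(1) qq(2) lens(2) df cond] .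
    have c4: "set ps' \<subseteq> carrier G" "p \<in> carrier G" "q \<in> carrier G" "set qs' \<subseteq> carrier G" using pc ps qs by auto
    have eq: "P ps \<otimes> \<delta> \<otimes> P qs = P ps' \<otimes> (p \<otimes> \<delta> \<otimes> q) \<otimes> P qs'"
      using P_append[of ps' "[p]"] c4 ps qs dc P_car by (simp add: m_assoc)
    have h1: "(if ps' = [] then \<not> K else ty (hd ps')) = ty (hd ps)" using ps tp by auto
    have h2: "(if qs' = [] then \<not> K else ty (last qs')) = ty (last qs)" using qs tp by auto
    show ?thesis using IH eq h1 h2 pne by simp
  qed
qed

lemma P_inv: "set ys \<subseteq> carrier G \<Longrightarrow> inv (P ys) = P (rev (map (m_inv G) ys))"
proof (induction ys)
  case Nil then show ?case by simp
next
  case (Cons y ys)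
  then have c: "y \<in> carrier G" "set ys \<subseteq> carrier G" by auto
  have "set (rev (map (m_inv G) ys)) \<subseteq> carrier G" using c by auto
  then show ?case using Cons c P_car P_append[of "rev (map (m_inv G) ys)" "[inv y]"]
    by (simp add: inv_mult_group)
qed

lemma alt2_rev_inv: assumes "alt2 ys" shows "alt2 (rev (map (m_inv G) ys))"
proof -
  have el: "\<forall>y\<in>set ys. y \<in> A \<union> B \<and> y \<notin> C" using assms by (simp add: alt2_def)
  have el2: "\<forall>y\<in>set (rev (map (m_inv G) ys)). y \<in> A \<union> B \<and> y \<notin> C"
  proof
    fix z assume "z \<in> set (rev (map (m_inv G) ys))"
    then obtain y where y: "y \<in> set ys" "z = inv y" by auto
    have "y \<in> A \<union> B" "y \<notin> C" "y \<in> carrier G" using el y let_car by auto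
    then show "z \<in> A \<union> B \<and> z \<notin> C" using y A_inv B_inv C_inv by (metis Un_iff inv_inv)
  qed
  have "successively (\<lambda>s t. ty s \<noteq> ty t) ys" using assms by (simp add: alt2_def)
  then have "successively (\<lambda>s t. ty (inv t) \<noteq> ty (inv s)) ys"
    by (rule successively_mono) (use el let_car ty_inv in auto)
  then show ?thesis using el2 by (simp add: alt2_def successively_map)
qed

lemma hd_rev_inv: "ys \<noteq> [] \<Longrightarrow> hd (rev (map (m_inv G) ys)) = inv (last ys)"
  by (simp add: hd_rev last_map)
lemma last_rev_inv: "ys \<noteq> [] \<Longrightarrow> last (rev (map (m_inv G) ys)) = inv (hd ys)"
  by (simp add: last_rev hd_map)

lemma foldr_car: "(\<forall>i\<in>set is. g i \<in> carrier G) \<Longrightarrow> foldr (\<lambda>i acc. g i \<otimes> acc) is \<one> \<in> carrier G"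
  by (induction "is") auto

lemma tele: assumes "\<forall>i<k. f i = LL i \<otimes> g i \<otimes> inv (LL (Suc i))" "\<forall>i\<le>k. LL i \<in> carrier G"
    "\<forall>i<k. g i \<in> carrier G" "j \<le> k"
  shows "foldr (\<lambda>i acc. f i \<otimes> acc) [j..<k] \<one> = LL j \<otimes> foldr (\<lambda>i acc. g i \<otimes> acc) [j..<k] \<one> \<otimes> inv (LL k)"
  using assms(4)
proof (induction j rule: inc_induct)
  case base then show ?case using assms by simp
next
  case (step m)
  have c: "LL m \<in> carrier G" "LL (Suc m) \<in> carrier G" "g m \<in> carrier G" "LL k \<in> carrier G"
    using assms step by auto
  have fc: "foldr (\<lambda>i acc. g i \<otimes> acc) [Suc m..<k] \<one> \<in> carrier G"
    by (intro foldr_car) (use assms(3) in auto)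
  have "foldr (\<lambda>i acc. f i \<otimes> acc) [m..<k] \<one> = f m \<otimes> foldr (\<lambda>i acc. f i \<otimes> acc) [Suc m..<k] \<one>"
    using step by (simp add: upt_conv_Cons)
  also have "\<dots> = (LL m \<otimes> g m \<otimes> inv (LL (Suc m))) \<otimes> (LL (Suc m) \<otimes> foldr (\<lambda>i acc. g i \<otimes> acc) [Suc m..<k] \<one> \<otimes> inv (LL k))"
    using step assms(1) by simp
  also have "\<dots> = LL m \<otimes> (g m \<otimes> foldr (\<lambda>i acc. g i \<otimes> acc) [Suc m..<k] \<one>) \<otimes> inv (LL k)"
    using c fc by (simp add: m_assoc)
  also have "\<dots> = LL m \<otimes> foldr (\<lambda>i acc. g i \<otimes> acc) [m..<k] \<one> \<otimes> inv (LL k)"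
    using step by (simp add: upt_conv_Cons)
  finally show ?case .
qed

end

context amal
begin

lemma conj_one: assumes "Y \<in> carrier G" "w \<in> carrier G" "Y \<otimes> w \<otimes> inv Y = \<one>" shows "w = \<one>"
proof -
  have "w = inv Y \<otimes> (Y \<otimes> w \<otimes> inv Y) \<otimes> Y" using assms(1,2) by (simp add: m_assoc)
  also have "\<dots> = \<one>" using assms by simp
  finally show ?thesis .
qed

lemma succ_map_nth: assumes "\<forall>i. Suc i < k \<longrightarrow> nd (e i, J i) (e (Suc i), J (Suc i))"
  shows "successively nd (map (\<lambda>i. (e i, J i)) [0..<k])"
  unfolding successively_conv_nth using assms by simp

theorem main:
  assumes RA: "n_RF_pair (G\<lparr>carrier := A\<rparr>) C n" and RB: "n_RF_pair (G\<lparr>carrier := B\<rparr>) C n"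
  shows "n_RF_pair G A n"
  unfolding n_RF_pair_def
proof
  fix a assume aa: "a \<in> carrier G - A"
  show "n_RF_rel G A n a" unfolding n_RF_rel_def
  proof (intro conjI allI impI)
    show "a \<in> carrier G - A" by fact
  next
    fix k :: nat and e :: "nat \<Rightarrow> int" and d :: "nat \<Rightarrow> 'a"
    assume k1: "1 \<le> k" and h1: "\<forall>i<k. e i \<in> {1, -1} \<and> d i \<in> A"
      and h2: "\<forall>i<k. e i = - e (Suc i mod k) \<longrightarrow> d i \<noteq> \<one>"
      and h3: "enat (card {i. i < k \<and> e i = 1}) < n"
      and h4: "enat (card {i. i < k \<and> e i = -1}) < n"
    obtain \<alpha> \<beta> us x vs where D: "\<alpha> \<in> A" "\<beta> \<in> A" "alt2 (us @ x # vs)" "length us = length vs"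
      "\<not> ty (hd (us @ x # vs))" "\<not> ty (last (us @ x # vs))" "a = \<alpha> \<otimes> P us \<otimes> x \<otimes> P vs \<otimes> \<beta>"
      using decomp aa by blast
    have alus: "alt2 us" "alt2 (x # vs)" "us = [] \<or> ty (last us) \<noteq> ty x"
      using D(3) alt2_append[of us "x # vs"] by auto
    have alvs: "x \<in> A \<union> B" "x \<notin> C" "alt2 vs" "vs = [] \<or> ty x \<noteq> ty (hd vs)"
      using alus(2) alt2_Cons by auto
    have hdl: "us \<noteq> [] \<Longrightarrow> \<not> ty (hd us)" "vs \<noteq> [] \<Longrightarrow> \<not> ty (last vs)"
      using D(5,6) by auto
    have emp: "us = [] \<longleftrightarrow> vs = []" using D(4) by auto
    define F where "F = ty x"
    have nF: "us = [] \<Longrightarrow> \<not> F" using D(5) F_def by simp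
    have xF: "x \<in> fac F" using fac_typ alvs F_def by blast
    have xc: "x \<in> carrier G" using xF fac_car by blast
    have "n_RF_pair (G\<lparr>carrier := fac F\<rparr>) C n" using RA RB by (cases F) (simp_all add: fac_def)
    then have "n_RF_rel (G\<lparr>carrier := fac F\<rparr>) C n x" using xF alvs(2) by (simp add: n_RF_pair_def)
    then have RF: "RFl n x" using RFl_from xF by blast
    have cus: "set us \<subseteq> carrier G" "set vs \<subseteq> carrier G" using alt2_car alus alvs by auto
    have cab: "\<alpha> \<in> carrier G" "\<beta> \<in> carrier G" using D A_car by auto
    define U where "U = \<alpha> \<otimes> P us"
    define V where "V = P vs \<otimes> \<beta>"
    have UV: "U \<in> carrier G" "V \<in> carrier G" using U_def V_def P_car cus cab by auto
    have aeq: "a = U \<otimes> x \<otimes> V" using D(7) U_def V_def P_car cus cab xc by (simp add: m_assoc)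
    define Lf where "Lf e' = (if e' = 1 then U else inv V)" for e' :: int
    define Rf where "Rf e' = (if e' = 1 then V else inv U)" for e' :: int
    have LRc: "Lf e' \<in> carrier G" "Rf e' \<in> carrier G" for e' using UV by (auto simp: Lf_def Rf_def)
    have apow: "a [^] e' = Lf e' \<otimes> x [^] e' \<otimes> Rf e'" if "e' \<in> {1, -1}" for e'
    proof (cases "e' = 1")
      case True then show ?thesis using aeq UV xc by (simp add: Lf_def Rf_def)
    next
      case False
      then have e': "e' = - 1" using that by simp
      have "a [^] e' = inv a" using int_pow_neg[of a 1] aeq UV xc e' by simp
      also have "\<dots> = inv V \<otimes> inv x \<otimes> inv U" using aeq UV xc by (simp add: inv_mult_group m_assoc)
      finally show ?thesis using int_pow_neg[of x 1] xc e' by (simp add: Lf_def Rf_def)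
    qed
    define J where "J i = Rf (e i) \<otimes> d i \<otimes> Lf (e (Suc i mod k))" for i
    have dc: "\<forall>i<k. d i \<in> carrier G" using h1 A_car by blast
    have Jc: "\<forall>i<k. J i \<in> carrier G" using dc LRc by (simp add: J_def)
    define LL where "LL i = Lf (e (i mod k))" for i
    have tel: "rf_word G a k e d = LL 0 \<otimes> rf_word G x k e J \<otimes> inv (LL k)"
    proof -
      have "\<forall>i<k. a [^] e i \<otimes> d i = LL i \<otimes> (x [^] e i \<otimes> J i) \<otimes> inv (LL (Suc i))"
      proof (intro allI impI)
        fix i assume i: "i < k"
        have "LL i \<otimes> (x [^] e i \<otimes> J i) \<otimes> inv (LL (Suc i))
           = Lf (e i) \<otimes> (x [^] e i \<otimes> (Rf (e i) \<otimes> d i \<otimes> Lf (e (Suc i mod k)))) \<otimes> inv (Lf (e (Suc i mod k)))"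
          using i by (simp add: LL_def J_def)
        also have "\<dots> = Lf (e i) \<otimes> x [^] e i \<otimes> Rf (e i) \<otimes> d i"
          using LRc xc dc i by (simp add: m_assoc)
        also have "\<dots> = a [^] e i \<otimes> d i" using apow h1 i by simp
        finally show "a [^] e i \<otimes> d i = LL i \<otimes> (x [^] e i \<otimes> J i) \<otimes> inv (LL (Suc i))" by simp
      qed
      moreover have "\<forall>i\<le>k. LL i \<in> carrier G" using LRc by (simp add: LL_def)
      moreover have "\<forall>i<k. x [^] e i \<otimes> J i \<in> carrier G" using Jc xc by simp
      ultimately show ?thesis
        using tele[of k "\<lambda>i. a [^] e i \<otimes> d i" LL "\<lambda>i. x [^] e i \<otimes> J i" 0] by (simp add: rf_word_def)
    qed
    have LLk: "LL k = LL 0" by (simp add: LL_def)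
    define ws where "ws = map (\<lambda>i. (e i, J i)) [0..<k]"
    have Wws: "rf_word G x k e J = W x ws" unfolding ws_def by (rule rf_word_W)
    have wsne: "ws \<noteq> []" using k1 ws_def by auto
    have JN: "J i \<noteq> \<one>" if i: "i < k" and ee: "e i = - e (Suc i mod k)" for i
    proof
      assume J1: "J i = \<one>"
      have di: "d i \<noteq> \<one>" "d i \<in> carrier G" using h2 i ee dc by auto
      have ei: "e i \<in> {1, -1}" using h1 i by simp
      show False
      proof (cases "e i = 1")
        case True
        then have "e (Suc i mod k) = -1" using ee by simp
        then have "V \<otimes> d i \<otimes> inv V = \<one>" using J1 True by (simp add: J_def Lf_def Rf_def)
        then show False using conj_one UV di by blast
      next
        case False
        then have "e i = -1" "e (Suc i mod k) = 1" using ei ee by auto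
        then have "inv U \<otimes> d i \<otimes> inv (inv U) = \<one>" using J1 UV by (simp add: J_def Lf_def Rf_def)
        then show False using conj_one UV di by (meson inv_closed)
      qed
    qed
    have sc: "successively nd ws"
      unfolding ws_def
    proof (rule succ_map_nth, intro allI impI)
      fix i assume "Suc i < k"
      then show "nd (e i, J i) (e (Suc i), J (Suc i))" using JN[of i] by (simp add: nd_def)
    qed
    have wr: "nd (last ws) (hd ws)"
    proof -
      have "last ws = (e (k - 1), J (k - 1))" "hd ws = (e 0, J 0)" using k1 by (auto simp: ws_def last_map hd_map)
      moreover have "Suc (k - 1) mod k = 0" using k1 by simp
      ultimately show ?thesis using JN[of "k - 1"] k1 by (simp add: nd_def)
    qed
    have cnts: "enat (cnt 1 ws) < n" "enat (cnt (-1) ws) < n"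
      using h3 h4 cnt_map unfolding ws_def by auto
    define Rl where "Rl e' = (if e' = 1 then vs else rev (map (m_inv G) us))" for e' :: int
    define Rel where "Rel e' = (if e' = 1 then \<beta> else inv \<alpha>)" for e' :: int
    define Ll where "Ll e' = (if e' = 1 then us else rev (map (m_inv G) vs))" for e' :: int
    define Lel where "Lel e' = (if e' = 1 then \<alpha> else inv \<beta>)" for e' :: int
    have Rdec: "Rf e' = P (Rl e') \<otimes> Rel e'" for e'
      using P_inv[OF cus(1)] UV cab P_car cus by (simp add: Rf_def Rl_def Rel_def V_def U_def inv_mult_group)
    have Ldec: "Lf e' = Lel e' \<otimes> P (Ll e')" for e'
      using P_inv[OF cus(2)] UV cab P_car cus by (simp add: Lf_def Ll_def Lel_def V_def U_def inv_mult_group)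
    have RelA: "Rel e' \<in> A" "Lel e' \<in> A" for e' using D(1,2) A_inv by (simp_all add: Rel_def Lel_def)
    have Rl1: "alt2 (Rl e')" "length (Rl e') = length us" for e'
      using alus alvs alt2_rev_inv D(4) by (simp_all add: Rl_def)
    have Ll1: "alt2 (Ll e')" "length (Ll e') = length us" for e'
      using alus alvs alt2_rev_inv D(4) by (simp_all add: Ll_def)
    have ty_inv': "ty (inv y) = ty y" if "y \<in> set us \<union> set vs" for y
      using ty_inv cus that by blast
    have Rl2: "\<not> ty (last (Rl e')) \<and> ty (hd (Rl e')) \<noteq> F" if "Rl e' \<noteq> []" for e'
    proof (cases "e' = 1")
      case True
      then have "vs \<noteq> []" using that by (simp add: Rl_def)
      then show ?thesis using True hdl alvs F_def by (auto simp: Rl_def)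
    next
      case False
      then have ne: "us \<noteq> []" using that by (simp add: Rl_def)
      have "ty (inv (hd us)) = ty (hd us)" "ty (inv (last us)) = ty (last us)" using ty_inv' ne by auto
      then show ?thesis using False ne hdl alus F_def by (auto simp: Rl_def hd_rev_inv last_rev_inv)
    qed
    have Ll2: "\<not> ty (hd (Ll e')) \<and> ty (last (Ll e')) \<noteq> F" if "Ll e' \<noteq> []" for e'
    proof (cases "e' = 1")
      case True
      then have "us \<noteq> []" using that by (simp add: Ll_def)
      then show ?thesis using True hdl alus F_def by (auto simp: Ll_def)
    next
      case False
      then have ne: "vs \<noteq> []" using that by (simp add: Ll_def)
      have "ty (inv (hd vs)) = ty (hd vs)" "ty (inv (last vs)) = ty (last vs)" using ty_inv' ne by auto
      then show ?thesis using False ne hdl alvs F_def by (auto simp: Ll_def hd_rev_inv last_rev_inv)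
    qed
    have JP: "J i \<in> C \<or> pat F (J i)" if i: "i < k" for i
    proof -
      let ?e = "e i" and ?e' = "e (Suc i mod k)"
      have Pc: "set (Rl ?e) \<subseteq> carrier G" "set (Ll ?e') \<subseteq> carrier G" using alt2_car Rl1 Ll1 by auto
      have dA: "Rel ?e \<otimes> d i \<otimes> Lel ?e' \<in> fac True" using RelA h1 i A_mult by (simp add: fac_def)
      have Jeq: "J i = P (Rl ?e) \<otimes> (Rel ?e \<otimes> d i \<otimes> Lel ?e') \<otimes> P (Ll ?e')"
        using Rdec Ldec P_car[OF Pc(1)] P_car[OF Pc(2)] RelA A_car dc i by (simp add: J_def m_assoc)
      have cond: "Rl ?e \<noteq> [] \<longrightarrow> ty (last (Rl ?e)) = (\<not> True) \<and> ty (hd (Ll ?e')) = (\<not> True)"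
      proof
        assume ne: "Rl ?e \<noteq> []"
        then have "Ll ?e' \<noteq> []" using Rl1 Ll1 by (metis length_0_conv)
        then show "ty (last (Rl ?e)) = (\<not> True) \<and> ty (hd (Ll ?e')) = (\<not> True)" using Rl2 Ll2 ne by blast
      qed
      have "P (Rl ?e) \<otimes> (Rel ?e \<otimes> d i \<otimes> Lel ?e') \<otimes> P (Ll ?e') \<in> C \<or>
        (\<exists>ys. alt2 ys \<and> ys \<noteq> [] \<and> P (Rl ?e) \<otimes> (Rel ?e \<otimes> d i \<otimes> Lel ?e') \<otimes> P (Ll ?e') = P ys \<and>
         ty (hd ys) = (if Rl ?e = [] then True else ty (hd (Rl ?e))) \<and>
         ty (last ys) = (if Ll ?e' = [] then True else ty (last (Ll ?e'))))"
        using jlem[OF refl Rl1(1) Ll1(1) _ dA cond] Rl1(2) Ll1(2) by simp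
      moreover have "(if Rl ?e = [] then True else ty (hd (Rl ?e))) = (\<not> F)"
      proof (cases "Rl ?e = []")
        case True then have "us = []" using Rl1 by (metis length_0_conv)
        then show ?thesis using True nF by simp
      next
        case False then show ?thesis using Rl2 by auto
      qed
      moreover have "(if Ll ?e' = [] then True else ty (last (Ll ?e'))) = (\<not> F)"
      proof (cases "Ll ?e' = []")
        case True then have "us = []" using Ll1 by (metis length_0_conv)
        then show ?thesis using True nF by simp
      next
        case False then show ?thesis using Ll2 by auto
      qed
      ultimately show ?thesis using Jeq by (auto simp: pat_def)
    qed
    have Wne: "W x ws \<noteq> \<one>"
    proof (cases "\<forall>i<k. J i \<in> C")
      case True
      have "\<forall>p\<in>set ws. fst p \<in> {1,-1} \<and> snd p \<in> C" using True h1 by (auto simp: ws_def)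
      then show ?thesis using RF wsne sc wr cnts unfolding RFl_def by blast
    next
      case False
      then obtain i0 where i0: "i0 < k" "J i0 \<notin> C" by blast
      define ws1 where "ws1 = take (Suc i0) ws"
      define ws2 where "ws2 = drop (Suc i0) ws"
      have wsa: "ws = ws1 @ ws2" by (simp add: ws1_def ws2_def)
      have ws1ne: "ws1 \<noteq> []" using wsne by (simp add: ws1_def)
      have l1: "last ws1 = (e i0, J i0)"
        using i0 by (simp add: ws1_def ws_def take_map last_map)
      have elws: "\<forall>p\<in>set ws. fst p \<in> {1,-1} \<and> snd p \<in> carrier G \<and> (snd p \<in> C \<or> pat F (snd p))"
        using h1 Jc JP by (auto simp: ws_def)
      have elc: "\<forall>p\<in>set ws1. snd p \<in> carrier G" "\<forall>p\<in>set ws2. snd p \<in> carrier G"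
        using elws wsa by auto
      have sc2: "successively nd (ws2 @ ws1)"
      proof -
        have "successively nd ws1" "successively nd ws2" using sc wsa by (auto simp: successively_append_iff)
        moreover have "ws2 \<noteq> [] \<Longrightarrow> nd (last ws2) (hd ws1)"
          using wr wsa ws1ne by simp
        ultimately show ?thesis by (auto simp: successively_append_iff)
      qed
      have cnt2: "cnt v (ws2 @ ws1) = cnt v ws" for v using wsa by (simp add: cnt_def)
      have "st F (W x (ws2 @ ws1))"
      proof (rule segL[OF RF xF alvs(2)])
        show "ws2 @ ws1 \<noteq> []" using ws1ne by simp
        show "\<forall>p\<in>set (ws2 @ ws1). fst p \<in> {1, - 1} \<and> snd p \<in> carrier G \<and> (snd p \<in> C \<or> pat F (snd p))"
          using elws wsa by auto
        show "snd (last (ws2 @ ws1)) \<notin> C" using l1 i0 ws1ne by simp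
        show "successively nd (ws2 @ ws1)" by (rule sc2)
        show "enat (cnt 1 (ws2 @ ws1)) < n" "enat (cnt (-1) (ws2 @ ws1)) < n" using cnt2 cnts by auto
      qed
      then have ne: "W x ws2 \<otimes> W x ws1 \<noteq> \<one>" using st_ne_one W_append[OF xc elc(2) elc(1)] by metis
      show ?thesis
      proof
        assume "W x ws = \<one>"
        then have "W x ws1 \<otimes> W x ws2 = \<one>" using W_append[OF xc elc(1) elc(2)] wsa by simp
        then have "W x ws2 \<otimes> W x ws1 = \<one>" using inv_comm W_car[OF xc elc(1)] W_car[OF xc elc(2)] by blast
        then show False using ne by simp
      qed
    qed
    show "rf_word G a k e d \<noteq> \<one>"
    proof
      assume "rf_word G a k e d = \<one>"
      then have "LL 0 \<otimes> rf_word G x k e J \<otimes> inv (LL 0) = \<one>" using tel LLk by simp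
      moreover have "rf_word G x k e J \<in> carrier G" using Wws W_car[OF xc] Jc by (auto simp: ws_def)
      ultimately have "rf_word G x k e J = \<one>" using conj_one[OF LRc(1)] by (simp add: LL_def)
      then show False using Wws Wne by simp
    qed
  qed
qed

end

lemma amal_swap: assumes "amal G A B C" shows "amal G B A C"
proof -
  interpret amal G A B C by fact
  show ?thesis
  proof (rule amal.intro[OF is_group], rule amal_axioms.intro)
    show "subgroup B G" by (rule subB)
    show "subgroup A G" by (rule subA)
    show "B \<inter> A = C" using ABC by blast
    show "generate G (B \<union> A) = carrier G" using gen by (simp add: Un_commute)
    show "\<forall>(H :: 'a list monoid) f g. group H \<longrightarrow>
        f \<in> hom (G\<lparr>carrier := B\<rparr>) H \<longrightarrow> g \<in> hom (G\<lparr>carrier := A\<rparr>) H \<longrightarrow>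
        (\<forall>c\<in>C. f c = g c) \<longrightarrow>
        (\<exists>h \<in> hom G H. (\<forall>a\<in>B. h a = f a) \<and> (\<forall>b\<in>A. h b = g b))"
    proof (intro allI impI)
      fix H :: "'a list monoid" and f g
      assume "group H" "f \<in> hom (G\<lparr>carrier := B\<rparr>) H" "g \<in> hom (G\<lparr>carrier := A\<rparr>) H" "\<forall>c\<in>C. f c = g c"
      then show "\<exists>h \<in> hom G H. (\<forall>a\<in>B. h a = f a) \<and> (\<forall>b\<in>A. h b = g b)"
        using univ by (metis (no_types, lifting))
    qed
  qed
qed

theorem proposition5p24:
  fixes G :: "('a, 'm) monoid_scheme" and A B C :: "'a set" and n :: enat
  assumes "amalgamated_free_product G A B C"
    and "2 \<le> n"
    and "n_RF_pair (G\<lparr>carrier := A\<rparr>) C n"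
    and "n_RF_pair (G\<lparr>carrier := B\<rparr>) C n"
  shows "n_RF_pair G A n \<and> n_RF_pair G B n"
proof -
  have h: "group G" "subgroup A G" "subgroup B G" "A \<inter> B = C" "generate G (A \<union> B) = carrier G"
    "\<forall>(H :: 'a list monoid) f g. group H \<longrightarrow>
        f \<in> hom (G\<lparr>carrier := A\<rparr>) H \<longrightarrow> g \<in> hom (G\<lparr>carrier := B\<rparr>) H \<longrightarrow>
        (\<forall>c\<in>C. f c = g c) \<longrightarrow>
        (\<exists>h \<in> hom G H. (\<forall>a\<in>A. h a = f a) \<and> (\<forall>b\<in>B. h b = g b))"
    using assms(1) unfolding amalgamated_free_product_def by simp_all
  have am: "amal G A B C" by (rule amal.intro[OF h(1)], rule amal_axioms.intro[OF h(2-6)])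
  show ?thesis
    using amal.main[OF am assms(3,4)] amal.main[OF amal_swap[OF am] assms(4,3)] by simp
qed

end
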